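(* Consider the stochastic energy exchange model, its time-$h$ sampling chain, and the set $\mathfrak{C}$ described in the context; let $\hat V=\max\{1,V\}$, $\hat W=\max\{1,W\}$, $\hat\alpha=2-2\eta$, and $\tau_{\mathfrak{C}}=\inf\{n>0:\mathbf{E}_{nh}\in\mathfrak{C}\}$. For any $\epsilon>0$ there exists a constant $C_6<\infty$ such that $$\mathbb{P}_{\mathbf{E}}[\tau_{\mathfrak{C}}>n]\le C_6\big(\hat W(\mathbf{E})+\hat V(\mathbf{E})\big)n^{-(\hat\alpha-\epsilon)}$$ for all $\mathbf{E}\in\mathbb{R}^N_+$ and all $n\ge1$.
   Context: Fix $N\ge1$, $T_L,T_R>0$, a sufficiently large $K$ ($K\gg T_L,T_R$) and $R(a,b)=\min\{K,\sqrt{\min(a,b)}\}$. The stochastic energy exchange model is the Markov jump process $\mathbf{E}_t=(E_1(t),\dots,E_N(t))$ on $\mathbb{R}^N_+$: for $i=1,\dots,N-1$ a clock of rate $R(E_i,E_{i+1})$ on sites $i,i+1$; when it rings $(E_i,E_{i+1})\mapsto(p(E_i+E_{i+1}),(1-p)(E_i+E_{i+1}))$, $p$ uniform on $(0,1)$; a clock of rate $R(T_L,E_1)$ (resp. $R(E_N,T_R)$) with $E_1\mapsto p(E_1+X_L)$ (resp. $E_N\mapsto p(E_N+X_R)$), $X_L,X_R$ exponential with means $T_L,T_R$; all independent. $P^t$ is its transition kernel. Let $W(\mathbf{E})=\sum_iE_i$, $a_m=1-\frac{2^{m-1}-1}{2^N-1}$, and $V(\mathbf{E})=\sum_{m=1}^N\sum_{k=1}^{N-m+1}\big(\sum_{j=0}^{m-1}E_{k+j}\big)^{a_m\eta-1}$.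 Fix sufficiently small $\eta>0$ and $h>0$; $M_0>1$ is a constant such that $P^hV-V\le-c_0V^{\alpha}$ on $\{V>M_0\}$ ($c_0>0$, $\alpha=1-\frac1{2(1-\eta)}$); with $G=\{V\le M_0\}$, return times $T_0=0$, $T_{n+1}=\inf\{k>T_n:\mathbf{E}_{kh}\in G\}$ and induced kernel $\hat PW(\mathbf{E})=\mathbb{E}_{\mathbf{E}}[W(\mathbf{E}_{T_1h})]$, $M_1>1$ is a constant such that $\hat PW\le(1-\delta)W$ on $G\cap\{W>M_1\}$ for some $\delta>0$. $\mathfrak{C}=\{\mathbf{E}:V(\mathbf{E})\le M_0,\ W(\mathbf{E})\le M_1\}$. *)

theory Defs
  imports "HOL-Probability.Probability"
begin

text \<open>States: functions nat => real, only the coordinates 1..N are meaningful.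
 The transition semigroup P^t of the bounded-rate jump process is represented as a
 positive operator on nonnegative functions (ennreal-valued), built by uniformization
 with the uniform rate bound Lambda = (N+1) K.\<close>

type_synonym state = "nat \<Rightarrow> real"

definition inOrth :: "nat \<Rightarrow> state \<Rightarrow> bool" where
  "inOrth N E \<longleftrightarrow> (\<forall>i\<in>{1..N}. E i > 0)"

definition Rate :: "real \<Rightarrow> real \<Rightarrow> real \<Rightarrow> real" where
  "Rate K a b = min K (sqrt (min a b))"

definition unifP :: "real measure" where
  "unifP = uniform_measure lborel {0<..<1}"

definition expo :: "real \<Rightarrow> real measure" where
  "expo T = density lborel (\<lambda>x. ennreal (exponential_density (1 / T) x))"

definition Lam :: "nat \<Rightarrow> real \<Rightarrow> real" where
  "Lam N K = real (N + 1) * K"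

definition totalRate :: "nat \<Rightarrow> real \<Rightarrow> real \<Rightarrow> real \<Rightarrow> state \<Rightarrow> real" where
  "totalRate N TL TR K E =
     (\<Sum>i=1..<N. Rate K (E i) (E (i+1))) + Rate K TL (E 1) + Rate K (E N) TR"

definition Qop :: "nat \<Rightarrow> real \<Rightarrow> real \<Rightarrow> real \<Rightarrow> (state \<Rightarrow> ennreal) \<Rightarrow> state \<Rightarrow> ennreal" where
  "Qop N TL TR K f E =
     (\<Sum>i=1..<N. ennreal (Rate K (E i) (E (i+1)) / Lam N K) *
        (\<integral>\<^sup>+ p. f (E(i := p * (E i + E (i+1)), i+1 := (1 - p) * (E i + E (i+1)))) \<partial>unifP))
   + ennreal (Rate K TL (E 1) / Lam N K) *
        (\<integral>\<^sup>+ p. (\<integral>\<^sup>+ x. f (E(1 := p * (E 1 + x))) \<partial>expo TL) \<partial>unifP)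
   + ennreal (Rate K (E N) TR / Lam N K) *
        (\<integral>\<^sup>+ p. (\<integral>\<^sup>+ x. f (E(N := p * (E N + x))) \<partial>expo TR) \<partial>unifP)
   + ennreal (1 - totalRate N TL TR K E / Lam N K) * f E"

definition Pt :: "nat \<Rightarrow> real \<Rightarrow> real \<Rightarrow> real \<Rightarrow> real \<Rightarrow> (state \<Rightarrow> ennreal) \<Rightarrow> state \<Rightarrow> ennreal" where
  "Pt N TL TR K t f E =
     (\<Sum>k. ennreal (exp (- Lam N K * t) * (Lam N K * t) ^ k / fact k) * ((Qop N TL TR K ^^ k) f) E)"

definition Wf :: "nat \<Rightarrow> state \<Rightarrow> real" where
  "Wf N E = (\<Sum>i=1..N. E i)"

definition aexp :: "nat \<Rightarrow> nat \<Rightarrow> real" where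
  "aexp N m = 1 - (2 ^ (m - 1) - 1) / (2 ^ N - 1)"

definition Vf :: "nat \<Rightarrow> real \<Rightarrow> state \<Rightarrow> real" where
  "Vf N \<eta> E = (\<Sum>m=1..N. \<Sum>k=1..N-m+1. (\<Sum>j=0..m-1. E (k+j)) powr (aexp N m * \<eta> - 1))"

text \<open>hitG f k E = E_E[f(E_{kh}); T_1 = k] for the return time T_1 to G (k >= 1).\<close>
fun hitG :: "nat \<Rightarrow> real \<Rightarrow> real \<Rightarrow> real \<Rightarrow> real \<Rightarrow> state set \<Rightarrow> (state \<Rightarrow> ennreal) \<Rightarrow> nat \<Rightarrow> state \<Rightarrow> ennreal" where
  "hitG N TL TR K h G f 0 = (\<lambda>E. 0)"
| "hitG N TL TR K h G f (Suc 0) = Pt N TL TR K h (\<lambda>y. indicator G y * f y)"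
| "hitG N TL TR K h G f (Suc (Suc k)) =
     Pt N TL TR K h (\<lambda>y. indicator (- G) y * hitG N TL TR K h G f (Suc k) y)"

text \<open>Induced kernel: hatP f (E) = E_E[f(E_{T_1 h})].\<close>
definition hatP :: "nat \<Rightarrow> real \<Rightarrow> real \<Rightarrow> real \<Rightarrow> real \<Rightarrow> state set \<Rightarrow> (state \<Rightarrow> ennreal) \<Rightarrow> state \<Rightarrow> ennreal" where
  "hatP N TL TR K h G f E = (\<Sum>k. hitG N TL TR K h G f k E)"

text \<open>survP n E = P_E[tau_C > n], tau_C = inf {n > 0. E_{nh} in C}.\<close>
fun survP :: "nat \<Rightarrow> real \<Rightarrow> real \<Rightarrow> real \<Rightarrow> real \<Rightarrow> state set \<Rightarrow> nat \<Rightarrow> state \<Rightarrow> ennreal" where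
  "survP N TL TR K h C 0 = (\<lambda>E. 1)"
| "survP N TL TR K h C (Suc n) =
     Pt N TL TR K h (\<lambda>y. indicator (- C) y * survP N TL TR K h C n y)"

end

theory Submission
  imports Defs
begin

abbreviation S :: "state measure" where "S \<equiv> PiM UNIV (\<lambda>_. borel)"
lemma spaceS[simp]: "space S = UNIV" by (simp add: space_PiM)
lemma coord_meas[measurable]: "(\<lambda>x. x j) \<in> borel_measurable S"
  by (rule measurable_component_singleton) simp
lemma sets_unifP[simp]: "sets unifP = sets borel" by (simp add: unifP_def)
lemma sets_expo[simp]: "sets (expo T) = sets borel" by (simp add: expo_def)
lemma space_unifP[simp]: "space unifP = UNIV" by (simp add: unifP_def)
lemma space_expo[simp]: "space (expo T) = UNIV" by (simp add: expo_def)
lemma prob_unifP: "prob_space unifP"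
  unfolding unifP_def by (rule prob_space_uniform_measure) auto
lemma prob_expo: "T > 0 \<Longrightarrow> prob_space (expo T)"
  unfolding expo_def using prob_space_exponential_density[of "1/T"] by simp
lemma sf_unifP: "sigma_finite_measure unifP"
  using prob_unifP by (simp add: prob_space_imp_sigma_finite)
lemma sf_expo: "T > 0 \<Longrightarrow> sigma_finite_measure (expo T)"
  using prob_expo by (simp add: prob_space_imp_sigma_finite)

definition upd2 :: "nat \<Rightarrow> state \<Rightarrow> real \<Rightarrow> state" where
  "upd2 i E p = E(i := p * (E i + E (i+1)), i+1 := (1 - p) * (E i + E (i+1)))"
definition upd1 :: "nat \<Rightarrow> state \<Rightarrow> real \<Rightarrow> real \<Rightarrow> state" where
  "upd1 i E p x = E(i := p * (E i + x))"

lemma upd2_meas[measurable]: "(\<lambda>(E,p). upd2 i E p) \<in> measurable (S \<Otimes>\<^sub>M borel) S"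
  unfolding upd2_def
  apply (rule measurable_PiM_single')
  apply (simp add: case_prod_beta fun_upd_def)
  apply measurable
  done
lemma upd1_meas[measurable]: "(\<lambda>z. upd1 i (fst (fst z)) (snd (fst z)) (snd z)) \<in> measurable ((S \<Otimes>\<^sub>M borel) \<Otimes>\<^sub>M borel) S"
  unfolding upd1_def
  apply (rule measurable_PiM_single')
  apply (simp add: case_prod_beta fun_upd_def)
  apply measurable
  done

lemma Qop_alt: "Qop N TL TR K f E =
     (\<Sum>i=1..<N. ennreal (Rate K (E i) (E (i+1)) / Lam N K) * (\<integral>\<^sup>+ p. f (upd2 i E p) \<partial>unifP))
   + ennreal (Rate K TL (E 1) / Lam N K) * (\<integral>\<^sup>+ p. (\<integral>\<^sup>+ x. f (upd1 1 E p x) \<partial>expo TL) \<partial>unifP)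
   + ennreal (Rate K (E N) TR / Lam N K) * (\<integral>\<^sup>+ p. (\<integral>\<^sup>+ x. f (upd1 N E p x) \<partial>expo TR) \<partial>unifP)
   + ennreal (1 - totalRate N TL TR K E / Lam N K) * f E"
  unfolding Qop_def upd1_def upd2_def by simp

lemma int2_meas:
  assumes f[measurable]: "f \<in> borel_measurable S"
  shows "(\<lambda>E. \<integral>\<^sup>+ p. f (upd2 i E p) \<partial>unifP) \<in> borel_measurable S"
proof -
  interpret sigma_finite_measure unifP by (rule sf_unifP)
  have "(\<lambda>(E,p). f (upd2 i E p)) \<in> borel_measurable (S \<Otimes>\<^sub>M unifP)"
    by (subst measurable_cong_sets[OF sets_pair_measure_cong[OF refl sets_unifP] refl]) measurable
  then show ?thesis by (rule borel_measurable_nn_integral)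
qed

lemma int1_meas:
  assumes f[measurable]: "f \<in> borel_measurable S" and T: "T > 0"
  shows "(\<lambda>E. \<integral>\<^sup>+ p. (\<integral>\<^sup>+ x. f (upd1 i E p x) \<partial>expo T) \<partial>unifP) \<in> borel_measurable S"
proof -
  interpret u: sigma_finite_measure unifP by (rule sf_unifP)
  interpret e: sigma_finite_measure "expo T" by (rule sf_expo[OF T])
  have "(\<lambda>(Ep,x). f (upd1 i (fst Ep) (snd Ep) x)) \<in> borel_measurable ((S \<Otimes>\<^sub>M unifP) \<Otimes>\<^sub>M expo T)"
    by (subst measurable_cong_sets[OF sets_pair_measure_cong[OF sets_pair_measure_cong[OF refl sets_unifP] sets_expo] refl]) measurable
  then have "(\<lambda>Ep. \<integral>\<^sup>+ x. f (upd1 i (fst Ep) (snd Ep) x) \<partial>expo T) \<in> borel_measurable (S \<Otimes>\<^sub>M unifP)"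
    by (rule e.borel_measurable_nn_integral)
  then have "(\<lambda>(E,p). \<integral>\<^sup>+ x. f (upd1 i E p x) \<partial>expo T) \<in> borel_measurable (S \<Otimes>\<^sub>M unifP)"
    by (simp add: case_prod_beta')
  then show ?thesis using u.borel_measurable_nn_integral[of "\<lambda>E p. \<integral>\<^sup>+ x. f (upd1 i E p x) \<partial>expo T"] by simp
qed

lemma Qop_meas:
  assumes f[measurable]: "f \<in> borel_measurable S" and "TL > 0" "TR > 0"
  shows "Qop N TL TR K f \<in> borel_measurable S"
proof -
  note [measurable] = int2_meas[OF f] int1_meas[OF f \<open>TL>0\<close>] int1_meas[OF f \<open>TR>0\<close>]
  show ?thesis
    unfolding Qop_alt[abs_def] totalRate_def Rate_def by measurable
qed

lemma upd2_meas1[measurable]: "(\<lambda>p. upd2 i E p) \<in> measurable borel S"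
  unfolding upd2_def
  apply (rule measurable_PiM_single')
  apply (simp add: case_prod_beta fun_upd_def)
  apply measurable
  done
lemma upd1_meas1[measurable]: "(\<lambda>x. upd1 i E p x) \<in> measurable borel S"
  unfolding upd1_def
  apply (rule measurable_PiM_single')
  apply (simp add: case_prod_beta fun_upd_def)
  apply measurable
  done
lemma upd1_meas2[measurable]: "(\<lambda>z. upd1 i E (fst z) (snd z)) \<in> measurable (borel \<Otimes>\<^sub>M borel) S"
  unfolding upd1_def
  apply (rule measurable_PiM_single')
  apply (simp add: case_prod_beta fun_upd_def)
  apply measurable
  done

lemma inner_meas:
  assumes f[measurable]: "f \<in> borel_measurable S" and T: "T > 0"
  shows "(\<lambda>p. \<integral>\<^sup>+ x. f (upd1 i E p x) \<partial>expo T) \<in> borel_measurable borel"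
proof -
  interpret e: sigma_finite_measure "expo T" by (rule sf_expo[OF T])
  have "(\<lambda>z. f (upd1 i E (fst z) (snd z))) \<in> borel_measurable (borel \<Otimes>\<^sub>M expo T)"
    by (subst measurable_cong_sets[OF sets_pair_measure_cong[OF refl sets_expo] refl]) measurable
  then have "(\<lambda>p. \<integral>\<^sup>+ x. f (upd1 i E (fst (p,x)) (snd (p,x))) \<partial>expo T) \<in> borel_measurable borel"
    by (intro e.borel_measurable_nn_integral) (simp add: case_prod_beta')
  then show ?thesis by simp
qed

lemma nn_add_unif: "F \<in> borel_measurable borel \<Longrightarrow> G \<in> borel_measurable borel \<Longrightarrow>
   (\<integral>\<^sup>+ p. F p + G p \<partial>unifP) = (\<integral>\<^sup>+ p. F p \<partial>unifP) + (\<integral>\<^sup>+ p. G p \<partial>unifP)"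
  by (rule nn_integral_add) (auto simp: measurable_cong_sets[OF sets_unifP refl])
lemma nn_add_expo: "F \<in> borel_measurable borel \<Longrightarrow> G \<in> borel_measurable borel \<Longrightarrow>
   (\<integral>\<^sup>+ p. F p + G p \<partial>expo T) = (\<integral>\<^sup>+ p. F p \<partial>expo T) + (\<integral>\<^sup>+ p. G p \<partial>expo T)"
  by (rule nn_integral_add) (auto simp: measurable_cong_sets[OF sets_expo refl])
lemma nn_cmult_unif: "F \<in> borel_measurable borel \<Longrightarrow> (\<integral>\<^sup>+ p. c * F p \<partial>unifP) = c * (\<integral>\<^sup>+ p. F p \<partial>unifP)"
  by (rule nn_integral_cmult) (auto simp: measurable_cong_sets[OF sets_unifP refl])
lemma nn_cmult_expo: "F \<in> borel_measurable borel \<Longrightarrow> (\<integral>\<^sup>+ p. c * F p \<partial>expo T) = c * (\<integral>\<^sup>+ p. F p \<partial>expo T)"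
  by (rule nn_integral_cmult) (auto simp: measurable_cong_sets[OF sets_expo refl])

lemma Qop_add:
  assumes f[measurable]: "f \<in> borel_measurable S" and g[measurable]: "g \<in> borel_measurable S" and T: "TL > 0" "TR > 0"
  shows "Qop N TL TR K (\<lambda>x. f x + g x) E = Qop N TL TR K f E + Qop N TL TR K g E"
proof -
  have a: "(\<integral>\<^sup>+ p. f (upd2 i E p) + g (upd2 i E p) \<partial>unifP) = (\<integral>\<^sup>+ p. f (upd2 i E p) \<partial>unifP) + (\<integral>\<^sup>+ p. g (upd2 i E p) \<partial>unifP)" for i
    by (rule nn_add_unif) measurable
  have b: "(\<integral>\<^sup>+ p. (\<integral>\<^sup>+ x. f (upd1 i E p x) + g (upd1 i E p x) \<partial>expo T) \<partial>unifP)
     = (\<integral>\<^sup>+ p. (\<integral>\<^sup>+ x. f (upd1 i E p x) \<partial>expo T) \<partial>unifP) + (\<integral>\<^sup>+ p. (\<integral>\<^sup>+ x. g (upd1 i E p x) \<partial>expo T) \<partial>unifP)"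
    if "T > 0" for i T
    apply (subst nn_add_expo, measurable)
    apply (rule nn_add_unif)
    using inner_meas[OF f that] inner_meas[OF g that] by auto
  show ?thesis unfolding Qop_alt a b[OF T(1)] b[OF T(2)]
    by (simp add: algebra_simps sum.distrib)
qed

lemma Qop_cmult:
  assumes f[measurable]: "f \<in> borel_measurable S" and T: "TL > 0" "TR > 0"
  shows "Qop N TL TR K (\<lambda>x. c * f x) E = c * Qop N TL TR K f E"
proof -
  have a: "(\<integral>\<^sup>+ p. c * f (upd2 i E p) \<partial>unifP) = c * (\<integral>\<^sup>+ p. f (upd2 i E p) \<partial>unifP)" for i
    by (rule nn_cmult_unif) measurable
  have b: "(\<integral>\<^sup>+ p. (\<integral>\<^sup>+ x. c * f (upd1 i E p x) \<partial>expo T) \<partial>unifP)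
     = c * (\<integral>\<^sup>+ p. (\<integral>\<^sup>+ x. f (upd1 i E p x) \<partial>expo T) \<partial>unifP)"
    if "T > 0" for i T
    apply (subst nn_cmult_expo, measurable)
    apply (rule nn_cmult_unif)
    using inner_meas[OF f that] by auto
  show ?thesis unfolding Qop_alt a b[OF T(1)] b[OF T(2)]
    by (simp add: algebra_simps sum_distrib_left)
qed

lemma AE_unif: "AE p in unifP. 0 < p \<and> p < 1"
  unfolding unifP_def by (rule AE_uniform_measureI) auto
lemma AE_expo: "AE x in expo T. 0 \<le> x"
  unfolding expo_def by (subst AE_density) (auto simp: exponential_density_def)

lemma orth_upd2: "inOrth N E \<Longrightarrow> i \<in> {1..<N} \<Longrightarrow> 0 < p \<Longrightarrow> p < 1 \<Longrightarrow> inOrth N (upd2 i E p)"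
proof -
  assume a: "inOrth N E" "i \<in> {1..<N}" "0 < p" "p < 1"
  then have "0 < E i + E (Suc i)" unfolding inOrth_def by (auto intro!: add_pos_pos)
  with a show ?thesis unfolding inOrth_def upd2_def by auto
qed
lemma orth_upd1: "inOrth N E \<Longrightarrow> i \<in> {1..N} \<Longrightarrow> 0 < p \<Longrightarrow> 0 \<le> x \<Longrightarrow> inOrth N (upd1 i E p x)"
  unfolding inOrth_def upd1_def by (auto intro!: mult_pos_pos add_pos_nonneg)

lemma Qop_mono:
  assumes E: "inOrth N E" and fg: "\<And>z. inOrth N z \<Longrightarrow> f z \<le> g z" and N: "N \<ge> 1"
  shows "Qop N TL TR K f E \<le> Qop N TL TR K g E"
proof -
  have a: "(\<integral>\<^sup>+ p. f (upd2 i E p) \<partial>unifP) \<le> (\<integral>\<^sup>+ p. g (upd2 i E p) \<partial>unifP)" if "i \<in> {1..<N}" for i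
    apply (rule nn_integral_mono_AE)
    using AE_unif by eventually_elim (auto intro!: fg orth_upd2 E that)
  have b: "(\<integral>\<^sup>+ p. (\<integral>\<^sup>+ x. f (upd1 i E p x) \<partial>expo T) \<partial>unifP)
     \<le> (\<integral>\<^sup>+ p. (\<integral>\<^sup>+ x. g (upd1 i E p x) \<partial>expo T) \<partial>unifP)" if "i \<in> {1..N}" for i T
    apply (rule nn_integral_mono_AE)
    using AE_unif apply eventually_elim
    apply (rule nn_integral_mono_AE)
    using AE_expo apply eventually_elim
    by (auto intro!: fg orth_upd1 E that)
  show ?thesis unfolding Qop_alt
    using N by (intro add_mono mult_left_mono sum_mono a b fg E) auto
qed


lemma Rate_nonneg: "K \<ge> 0 \<Longrightarrow> a \<ge> 0 \<Longrightarrow> b \<ge> 0 \<Longrightarrow> Rate K a b \<ge> 0"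
  unfolding Rate_def by auto
lemma Rate_le: "Rate K a b \<le> K" unfolding Rate_def by auto

lemma ennreal4: "(a::real) \<ge> 0 \<Longrightarrow> b \<ge> 0 \<Longrightarrow> c \<ge> 0 \<Longrightarrow> a + b + c \<le> 1 \<Longrightarrow>
  ennreal a + ennreal b + ennreal c + ennreal (1 - (a + b + c)) = 1"
  by (simp add: ennreal_plus[symmetric] del: ennreal_plus)

lemma weights_sum:
  assumes E: "inOrth N E" and N: "N \<ge> 1" and K: "K > 0" and T: "TL > 0" "TR > 0"
  shows "(\<Sum>i=1..<N. ennreal (Rate K (E i) (E (i+1)) / Lam N K)) + ennreal (Rate K TL (E 1) / Lam N K)
        + ennreal (Rate K (E N) TR / Lam N K) + ennreal (1 - totalRate N TL TR K E / Lam N K) = 1"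
proof -
  have Epos: "i \<in> {1..N} \<Longrightarrow> 0 < E i" for i using E unfolding inOrth_def by auto
  have L: "Lam N K > 0" unfolding Lam_def using K by simp
  have r: "i \<in> {1..<N} \<Longrightarrow> 0 \<le> Rate K (E i) (E (i+1))" for i
    using Epos[of i] Epos[of "i+1"] K by (intro Rate_nonneg) auto
  have rL: "0 \<le> Rate K TL (E 1)" using Epos[of 1] K T N by (intro Rate_nonneg) auto
  have rR: "0 \<le> Rate K (E N) TR" using Epos[of N] K T N by (intro Rate_nonneg) auto
  have "(\<Sum>i=1..<N. Rate K (E i) (E (i+1))) \<le> (\<Sum>i=1..<N. K)" by (rule sum_mono) (rule Rate_le)
  also have "\<dots> = real (N - 1) * K" by simp
  finally have tot: "totalRate N TL TR K E \<le> Lam N K"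
    unfolding totalRate_def Lam_def using Rate_le[of K TL "E 1"] Rate_le[of K "E N" TR] N
    by (simp add: of_nat_diff algebra_simps)
  have w0: "0 \<le> 1 - totalRate N TL TR K E / Lam N K" using tot L by (simp add: field_simps)
  have "(\<Sum>i=1..<N. ennreal (Rate K (E i) (E (i+1)) / Lam N K)) = ennreal (\<Sum>i=1..<N. Rate K (E i) (E (i+1)) / Lam N K)"
    using r L by (intro sum_ennreal) auto
  then show ?thesis
    using r rL rR L w0
    apply (simp add: ennreal_plus[symmetric] sum_nonneg del: ennreal_plus)
    apply (simp add: totalRate_def sum_divide_distrib[symmetric] diff_divide_distrib add_divide_distrib)
    apply (rule ennreal4)
    using tot L r by (auto intro!: sum_nonneg simp: totalRate_def field_simps)
qed

lemma Qop_le: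
  assumes E: "inOrth N E" and N: "N \<ge> 1" and K: "K > 0" and T: "TL > 0" "TR > 0"
  and a: "\<And>i. i \<in> {1..<N} \<Longrightarrow> (\<integral>\<^sup>+ p. f (upd2 i E p) \<partial>unifP) \<le> B"
  and b: "(\<integral>\<^sup>+ p. (\<integral>\<^sup>+ x. f (upd1 1 E p x) \<partial>expo TL) \<partial>unifP) \<le> B"
  and c: "(\<integral>\<^sup>+ p. (\<integral>\<^sup>+ x. f (upd1 N E p x) \<partial>expo TR) \<partial>unifP) \<le> B"
  and d: "f E \<le> B"
  shows "Qop N TL TR K f E \<le> B"
proof -
  have "Qop N TL TR K f E \<le> (\<Sum>i=1..<N. ennreal (Rate K (E i) (E (i+1)) / Lam N K) * B)
     + ennreal (Rate K TL (E 1) / Lam N K) * B + ennreal (Rate K (E N) TR / Lam N K) * B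
     + ennreal (1 - totalRate N TL TR K E / Lam N K) * B"
    unfolding Qop_alt by (intro add_mono mult_left_mono sum_mono a b c d) auto
  also have "\<dots> = ((\<Sum>i=1..<N. ennreal (Rate K (E i) (E (i+1)) / Lam N K)) + ennreal (Rate K TL (E 1) / Lam N K)
        + ennreal (Rate K (E N) TR / Lam N K) + ennreal (1 - totalRate N TL TR K E / Lam N K)) * B"
    by (simp only: distrib_right sum_distrib_right)
  also have "\<dots> = B" using weights_sum[OF E N K T] by simp
  finally show ?thesis .
qed

lemma nn_const_unif: "(\<integral>\<^sup>+ p. c \<partial>unifP) = c"
  using prob_space.emeasure_space_1[OF prob_unifP] by simp
lemma nn_const_expo: "T > 0 \<Longrightarrow> (\<integral>\<^sup>+ p. c \<partial>expo T) = c"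
  using prob_space.emeasure_space_1[OF prob_expo] by simp

lemma em_unif[simp]: "emeasure unifP UNIV = 1"
  using prob_space.emeasure_space_1[OF prob_unifP] by simp
lemma em_expo[simp]: "T > 0 \<Longrightarrow> emeasure (expo T) UNIV = 1"
  using prob_space.emeasure_space_1[OF prob_expo] by simp

lemma Qop_one:
  assumes E: "inOrth N E" and N: "N \<ge> 1" and K: "K > 0" and T: "TL > 0" "TR > 0"
  shows "Qop N TL TR K (\<lambda>_. 1) E \<le> 1"
  by (rule Qop_le[OF E N K T]) (auto simp: nn_const_unif nn_const_expo T)


lemma powr_int01:
  assumes b: "-1 < (b::real)"
  shows "(\<integral>\<^sup>+ p. ennreal (p powr b) * indicator {0<..<1} p \<partial>lborel) = ennreal (1 / (b + 1))"
proof -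
  have "((\<lambda>x. x powr b) has_integral (1 powr (b+1) / (b+1))) {0..1}"
    by (rule has_integral_powr_from_0) (use b in auto)
  then have "((\<lambda>x. x powr b) has_integral (1 / (b+1))) {0<..<1}"
    by (simp add: has_integral_Icc_iff_Ioo)
  then show ?thesis by (subst nn_integral_has_integral_lebesgue') auto
qed

lemma e2ennreal_one[simp]: "e2ennreal 1 = 1"
  by (metis e2ennreal_ereal ennreal_1 one_ereal_def)

lemma powr_int01':
  assumes b: "-1 < (b::real)"
  shows "(\<integral>\<^sup>+ p. ennreal ((1 - p) powr b) * indicator {0<..<1} p \<partial>lborel) = ennreal (1 / (b + 1))"
proof -
  have "(\<integral>\<^sup>+ p. ennreal (p powr b) * indicator {0<..<1} p \<partial>lborel) =
        (\<integral>\<^sup>+ p. ennreal ((1 + -1 * p) powr b) * indicator {0<..<1} (1 + -1 * p) \<partial>lborel)"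
    using nn_integral_real_affine[of "\<lambda>p. ennreal (p powr b) * indicator {0<..<1} p" "-1" 1]
    by simp
  also have "\<dots> = (\<integral>\<^sup>+ p. ennreal ((1 - p) powr b) * indicator {0<..<1} p \<partial>lborel)"
    by (auto intro!: nn_integral_cong simp: indicator_def)
  finally show ?thesis using powr_int01[OF b] by simp
qed

lemma unif_pow:
  assumes b: "-1 < (b::real)"
  shows "(\<integral>\<^sup>+ p. ennreal (p powr b + (1 - p) powr b) \<partial>unifP) = ennreal (2 / (b + 1))"
proof -
  have "(\<integral>\<^sup>+ p. ennreal (p powr b + (1 - p) powr b) \<partial>unifP)
     = (\<integral>\<^sup>+ p. ennreal (p powr b + (1 - p) powr b) * indicator {0<..<1} p \<partial>lborel)"
    unfolding unifP_def by (subst nn_integral_uniform_measure) (auto simp: divide_ennreal_def)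
  also have "\<dots> = (\<integral>\<^sup>+ p. ennreal (p powr b) * indicator {0<..<1} p + ennreal ((1 - p) powr b) * indicator {0<..<1} p \<partial>lborel)"
    by (intro nn_integral_cong) (simp add: ennreal_plus distrib_right)
  also have "\<dots> = ennreal (1 / (b + 1)) + ennreal (1 / (b + 1))"
    by (subst nn_integral_add) (auto simp: powr_int01 powr_int01' b)
  also have "\<dots> = ennreal (2 / (b + 1))" using b by (simp add: ennreal_plus[symmetric] del: ennreal_plus)
  finally show ?thesis .
qed

lemma expo_mean:
  assumes T: "T > 0"
  shows "(\<integral>\<^sup>+ x. ennreal x \<partial>expo T) = ennreal T"
proof -
  have "(\<integral>\<^sup>+ x. ennreal x \<partial>expo T) = (\<integral>\<^sup>+ x. ennreal (exponential_density (1/T) x) * ennreal x \<partial>lborel)"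
    unfolding expo_def by (subst nn_integral_density) auto
  also have "\<dots> = (\<integral>\<^sup>+ x. ennreal (erlang_density 0 (1/T) x * x ^ 1) \<partial>lborel)"
    using T by (intro nn_integral_cong) (auto simp: exponential_density_def ennreal_mult[symmetric] ennreal_neg)
  also have "\<dots> = ennreal T" using T by (subst nn_integral_erlang_ith_moment) auto
  finally show ?thesis .
qed


lemma Wf_meas[measurable]: "(\<lambda>E. Wf N E) \<in> borel_measurable S" unfolding Wf_def by measurable
lemma Vf_meas[measurable]: "(\<lambda>E. Vf N \<eta> E) \<in> borel_measurable S" unfolding Vf_def by measurable

lemma Wf_upd2: assumes "i \<in> {1..<N}" shows "Wf N (upd2 i E p) = Wf N E"
proof -
  have e: "upd2 i E p j = E j + (if j = i then p * (E i + E (i+1)) - E i else 0)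
        + (if j = i+1 then (1 - p) * (E i + E (i+1)) - E (i+1) else 0)" for j
    unfolding upd2_def by auto
  show ?thesis unfolding Wf_def e sum.distrib using assms
    by (simp add: sum.delta algebra_simps)
qed

lemma Wf_upd1: assumes "i \<in> {1..N}" shows "Wf N (upd1 i E p x) = Wf N E + (p * (E i + x) - E i)"
proof -
  have e: "upd1 i E p x j = E j + (if j = i then p * (E i + x) - E i else 0)" for j
    unfolding upd1_def by auto
  show ?thesis unfolding Wf_def e sum.distrib using assms
    by (simp add: sum.delta algebra_simps)
qed

lemma Wf_nonneg: "inOrth N E \<Longrightarrow> 0 \<le> Wf N E"
  unfolding Wf_def inOrth_def by (rule sum_nonneg) (auto intro: less_imp_le)

lemma Qop_W:
  assumes E: "inOrth N E" and N: "N \<ge> 1" and K: "K > 0" and T: "TL > 0" "TR > 0"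
  shows "Qop N TL TR K (\<lambda>y. ennreal (Wf N y)) E \<le> ennreal (Wf N E + TL + TR)"
proof (rule Qop_le[OF E N K T])
  have W0: "0 \<le> Wf N E" by (rule Wf_nonneg[OF E])
  have E1: "0 < E i" if "i \<in> {1..N}" for i using E that unfolding inOrth_def by auto
  show "(\<integral>\<^sup>+ p. ennreal (Wf N (upd2 i E p)) \<partial>unifP) \<le> ennreal (Wf N E + TL + TR)" if "i \<in> {1..<N}" for i
    using that T W0 by (simp add: Wf_upd2 nn_const_unif)
  have bnd: "(\<integral>\<^sup>+ p. (\<integral>\<^sup>+ x. ennreal (Wf N (upd1 i E p x)) \<partial>expo T) \<partial>unifP) \<le> ennreal (Wf N E + T)"
    if i: "i \<in> {1..N}" and T: "T > 0" for i T
  proof -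
    have "(\<integral>\<^sup>+ p. (\<integral>\<^sup>+ x. ennreal (Wf N (upd1 i E p x)) \<partial>expo T) \<partial>unifP)
       \<le> (\<integral>\<^sup>+ p. (\<integral>\<^sup>+ x. ennreal (Wf N E) + ennreal x \<partial>expo T) \<partial>unifP)"
      apply (rule nn_integral_mono_AE)
      using AE_unif apply eventually_elim
      apply (rule nn_integral_mono_AE)
      using AE_expo apply eventually_elim
    proof -
      fix p x :: real assume p: "0 < p \<and> p < 1" and x: "0 \<le> x"
      have "p * (E i + x) \<le> E i + x" using p x E1[OF i] by (intro mult_left_le_one_le) auto
      then have "Wf N (upd1 i E p x) \<le> Wf N E + x" using Wf_upd1[OF i] by simp
      then show "ennreal (Wf N (upd1 i E p x)) \<le> ennreal (Wf N E) + ennreal x"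
        using W0 x by (simp add: ennreal_plus[symmetric] del: ennreal_plus)
    qed
    also have "\<dots> = ennreal (Wf N E + T)"
      using W0 T by (simp add: nn_add_expo nn_const_expo expo_mean nn_const_unif)
    finally show ?thesis .
  qed
  show "(\<integral>\<^sup>+ p. (\<integral>\<^sup>+ x. ennreal (Wf N (upd1 1 E p x)) \<partial>expo TL) \<partial>unifP) \<le> ennreal (Wf N E + TL + TR)"
    using bnd[of 1 TL] N T by (auto elim!: order_trans intro!: ennreal_leI)
  show "(\<integral>\<^sup>+ p. (\<integral>\<^sup>+ x. ennreal (Wf N (upd1 N E p x)) \<partial>expo TR) \<partial>unifP) \<le> ennreal (Wf N E + TL + TR)"
    using bnd[of N TR] N T by (auto elim!: order_trans intro!: ennreal_leI)
  show "ennreal (Wf N E) \<le> ennreal (Wf N E + TL + TR)" using T by (intro ennreal_leI) auto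
qed


lemma aexp_le1: "m \<ge> 1 \<Longrightarrow> N \<ge> 1 \<Longrightarrow> aexp N m \<le> 1"
proof -
  assume "m \<ge> 1" "N \<ge> 1"
  have "(1::real) \<le> 2 ^ (m - 1)" by simp
  moreover have "(1::real) < 2 ^ N" using \<open>N \<ge> 1\<close> by (simp add: one_less_power)
  ultimately show ?thesis unfolding aexp_def by (simp add: field_simps)
qed

lemma aexp_mono: "1 \<le> m \<Longrightarrow> m \<le> N \<Longrightarrow> aexp N N \<le> aexp N m"
proof -
  assume "1 \<le> m" "m \<le> N"
  have "(2::real) ^ (m - 1) \<le> 2 ^ (N - 1)" using \<open>m \<le> N\<close> by (intro power_increasing) auto
  moreover have "(1::real) < 2 ^ N" using \<open>1 \<le> m\<close> \<open>m \<le> N\<close> by (simp add: one_less_power)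
  ultimately show ?thesis unfolding aexp_def by (intro diff_left_mono divide_right_mono) auto
qed

lemma aexp_pos: "N \<ge> 1 \<Longrightarrow> 0 < aexp N N"
proof -
  assume N: "N \<ge> 1"
  have "(2::real) ^ N = 2 * 2 ^ (N - 1)" using N by (metis Suc_diff_1 less_le_trans zero_less_one power_Suc)
  moreover have "(1::real) \<le> 2 ^ (N - 1)" by simp
  ultimately have "(2::real) ^ (N - 1) - 1 < 2 ^ N - 1" by simp
  moreover have "(0::real) < 2 ^ N - 1" using N by (simp add: one_less_power)
  ultimately show ?thesis unfolding aexp_def by (simp add: field_simps)
qed

lemma Vf_scale:
  assumes E: "inOrth N E" and q: "0 < q" "q \<le> 1" and E': "\<And>j. j \<in> {1..N} \<Longrightarrow> q * E j \<le> E' j"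
    and eta: "0 < \<eta>" "\<eta> < 1" and N: "N \<ge> 1"
  shows "Vf N \<eta> E' \<le> q powr (aexp N N * \<eta> - 1) * Vf N \<eta> E"
  unfolding Vf_def sum_distrib_left
proof (intro sum_mono)
  fix m k assume m: "m \<in> {1..N}" and k: "k \<in> {1..N - m + 1}"
  have idx: "k + j \<in> {1..N}" if "j \<in> {0..m-1}" for j using m k that by auto
  have Epos: "0 < E (k + j)" if "j \<in> {0..m-1}" for j using E idx[OF that] unfolding inOrth_def by auto
  let ?S = "\<Sum>j=0..m-1. E (k + j)" and ?S' = "\<Sum>j=0..m-1. E' (k + j)"
  let ?b = "aexp N m * \<eta> - 1"
  have Spos: "0 < ?S" by (rule sum_pos) (use Epos in auto)
  have "q * ?S \<le> ?S'" unfolding sum_distrib_left by (intro sum_mono E' idx)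
  moreover have bneg: "?b \<le> 0" using aexp_le1[of m N] m eta by (auto simp: mult_le_one)
  ultimately have "?S' powr ?b \<le> (q * ?S) powr ?b" using q Spos by (intro powr_mono2') auto
  also have "\<dots> = q powr ?b * ?S powr ?b" using q Spos by (simp add: powr_mult)
  also have "\<dots> \<le> q powr (aexp N N * \<eta> - 1) * ?S powr ?b"
    using aexp_mono[of m N] m eta q by (intro mult_right_mono powr_mono') auto
  finally show "?S' powr ?b \<le> q powr (aexp N N * \<eta> - 1) * ?S powr ?b" .
qed

lemma Vf_nonneg: "0 \<le> Vf N \<eta> E" unfolding Vf_def by (intro sum_nonneg) auto

lemma Qop_V:
  assumes E: "inOrth N E" and N: "N \<ge> 1" and K: "K > 0" and T: "TL > 0" "TR > 0"
    and eta: "0 < \<eta>" "\<eta> < 1"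
  shows "Qop N TL TR K (\<lambda>y. ennreal (Vf N \<eta> y)) E \<le> ennreal (2 / (aexp N N * \<eta>) * Vf N \<eta> E)"
proof (rule Qop_le[OF E N K T])
  define b where "b = aexp N N * \<eta> - 1"
  have ap: "0 < aexp N N * \<eta>" using aexp_pos[OF N] eta by simp
  have b1: "-1 < b" using ap by (simp add: b_def)
  have bb: "b + 1 = aexp N N * \<eta>" by (simp add: b_def)
  have E1: "0 < E i" if "i \<in> {1..N}" for i using E that unfolding inOrth_def by auto
  have V0: "0 \<le> Vf N \<eta> E" by (rule Vf_nonneg)
  have key: "(\<integral>\<^sup>+ p. ennreal (p powr b + (1 - p) powr b) * ennreal (Vf N \<eta> E) \<partial>unifP)
        = ennreal (2 / (aexp N N * \<eta>) * Vf N \<eta> E)"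
  proof -
    have m: "(\<lambda>p. ennreal (p powr b + (1-p) powr b)) \<in> borel_measurable unifP"
      by (simp add: measurable_cong_sets[OF sets_unifP refl])
    have "(\<integral>\<^sup>+ p. ennreal (p powr b + (1 - p) powr b) * ennreal (Vf N \<eta> E) \<partial>unifP)
       = (\<integral>\<^sup>+ p. ennreal (p powr b + (1 - p) powr b) \<partial>unifP) * ennreal (Vf N \<eta> E)"
      by (rule nn_integral_multc[OF m])
    also have "\<dots> = ennreal (2 / (b + 1)) * ennreal (Vf N \<eta> E)" by (simp only: unif_pow[OF b1])
    also have "\<dots> = ennreal (2 / (aexp N N * \<eta>) * Vf N \<eta> E)"
      using ap V0 by (simp add: bb ennreal_mult[symmetric])
    finally show ?thesis .
  qed
  have qb: "q powr b \<le> p powr b + (1 - p) powr b" if "q = p \<or> q = 1 - p" for q p :: real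
    using that by auto
  show "(\<integral>\<^sup>+ p. ennreal (Vf N \<eta> (upd2 i E p)) \<partial>unifP) \<le> ennreal (2 / (aexp N N * \<eta>) * Vf N \<eta> E)"
    if i: "i \<in> {1..<N}" for i
    unfolding key[symmetric]
    apply (rule nn_integral_mono_AE)
    using AE_unif apply eventually_elim
  proof -
    fix p :: real assume p: "0 < p \<and> p < 1"
    define q where "q = min p (1 - p)"
    have q: "0 < q" "q \<le> 1" "q \<le> p" "q \<le> 1 - p" using p by (auto simp: q_def)
    have "Vf N \<eta> (upd2 i E p) \<le> q powr b * Vf N \<eta> E"
      unfolding b_def
    proof (rule Vf_scale[OF E q(1,2) _ eta N])
      fix j assume j: "j \<in> {1..N}"
      have Ei: "0 < E i" "0 < E (i+1)" using i E1 by auto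
      show "q * E j \<le> upd2 i E p j"
      proof (cases "j = i+1")
        case True
        then show ?thesis using q Ei unfolding upd2_def
          by (simp add: mult_mono)
      next
        case False
        show ?thesis
        proof (cases "j = i")
          case True
          then show ?thesis using q Ei \<open>j \<noteq> i+1\<close> unfolding upd2_def by (simp add: mult_mono)
        next
          case False
          then show ?thesis using q E1[OF j] \<open>j \<noteq> i+1\<close> unfolding upd2_def
            by (simp add: mult_left_le_one_le)
        qed
      qed
    qed
    also have "\<dots> \<le> (p powr b + (1 - p) powr b) * Vf N \<eta> E"
      by (intro mult_right_mono qb V0) (auto simp: q_def min_def)
    finally show "ennreal (Vf N \<eta> (upd2 i E p)) \<le> ennreal (p powr b + (1 - p) powr b) * ennreal (Vf N \<eta> E)"
      by (subst ennreal_mult[symmetric]) (auto intro!: ennreal_leI V0)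
  qed
  have bnd: "(\<integral>\<^sup>+ p. (\<integral>\<^sup>+ x. ennreal (Vf N \<eta> (upd1 i E p x)) \<partial>expo T) \<partial>unifP) \<le> ennreal (2 / (aexp N N * \<eta>) * Vf N \<eta> E)"
    if i: "i \<in> {1..N}" and T: "T > 0" for i T
    unfolding key[symmetric]
    apply (rule nn_integral_mono_AE)
    using AE_unif apply eventually_elim
  proof -
    fix p :: real assume p: "0 < p \<and> p < 1"
    have "(\<integral>\<^sup>+ x. ennreal (Vf N \<eta> (upd1 i E p x)) \<partial>expo T) \<le> (\<integral>\<^sup>+ x. ennreal (p powr b + (1 - p) powr b) * ennreal (Vf N \<eta> E) \<partial>expo T)"
      apply (rule nn_integral_mono_AE)
      using AE_expo apply eventually_elim
    proof -
      fix x :: real assume x: "0 \<le> x"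
      have "Vf N \<eta> (upd1 i E p x) \<le> p powr b * Vf N \<eta> E"
        unfolding b_def
      proof (rule Vf_scale[OF E _ _ _ eta N])
        fix j assume j: "j \<in> {1..N}"
        show "p * E j \<le> upd1 i E p x j"
          using p x E1[OF j] unfolding upd1_def by (auto simp: mult_left_le_one_le)
      qed (use p in auto)
      also have "\<dots> \<le> (p powr b + (1 - p) powr b) * Vf N \<eta> E"
        by (intro mult_right_mono qb V0) auto
      finally show "ennreal (Vf N \<eta> (upd1 i E p x)) \<le> ennreal (p powr b + (1 - p) powr b) * ennreal (Vf N \<eta> E)"
      by (subst ennreal_mult[symmetric]) (auto intro!: ennreal_leI V0)
    qed
    also have "\<dots> = ennreal (p powr b + (1 - p) powr b) * ennreal (Vf N \<eta> E)"
      using T by (simp add: nn_const_expo)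
    finally show "(\<integral>\<^sup>+ x. ennreal (Vf N \<eta> (upd1 i E p x)) \<partial>expo T) \<le> ennreal (p powr b + (1 - p) powr b) * ennreal (Vf N \<eta> E)" .
  qed
  show "(\<integral>\<^sup>+ p. (\<integral>\<^sup>+ x. ennreal (Vf N \<eta> (upd1 1 E p x)) \<partial>expo TL) \<partial>unifP) \<le> ennreal (2 / (aexp N N * \<eta>) * Vf N \<eta> E)"
    using bnd[of 1 TL] N T by auto
  show "(\<integral>\<^sup>+ p. (\<integral>\<^sup>+ x. ennreal (Vf N \<eta> (upd1 N E p x)) \<partial>expo TR) \<partial>unifP) \<le> ennreal (2 / (aexp N N * \<eta>) * Vf N \<eta> E)"
    using bnd[of N TR] N T by auto
  have "aexp N N * \<eta> \<le> 1" using aexp_le1[of N N] N eta by (simp add: mult_le_one)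
  then have "1 \<le> 2 / (aexp N N * \<eta>)" using ap by (simp add: field_simps)
  then show "ennreal (Vf N \<eta> E) \<le> ennreal (2 / (aexp N N * \<eta>) * Vf N \<eta> E)"
    using V0 mult_right_mono[OF \<open>1 \<le> 2 / (aexp N N * \<eta>)\<close> V0] by (intro ennreal_leI) simp
qed


lemma poisson_mgf:
  assumes c: "c \<ge> 0" and l: "l \<ge> 0"
  shows "(\<Sum>k. ennreal (exp (- l) * l ^ k / fact k) * ennreal (c ^ k)) = ennreal (exp (l * (c - 1)))"
proof -
  have s: "(\<lambda>k. exp (- l) * ((l * c) ^ k / fact k)) sums (exp (- l) * exp (l * c))"
    using exp_converges[of "l * c"] by (intro sums_mult) (simp add: divide_inverse mult.commute)
  have "(\<Sum>k. ennreal (exp (- l) * l ^ k / fact k) * ennreal (c ^ k)) = (\<Sum>k. ennreal (exp (- l) * ((l * c) ^ k / fact k)))"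
    using c l by (intro suminf_cong) (simp add: ennreal_mult[symmetric] power_mult_distrib)
  also have "\<dots> = ennreal (\<Sum>k. exp (- l) * ((l * c) ^ k / fact k))"
    using c l s by (intro suminf_ennreal2) (auto simp: sums_summable)
  also have "\<dots> = ennreal (exp (l * (c - 1)))"
    using s by (simp add: sums_unique[symmetric] exp_add[symmetric] algebra_simps)
  finally show ?thesis .
qed

context
  fixes N :: nat and TL TR K h :: real
  assumes N: "N \<ge> 1" and TL: "TL > 0" and TR: "TR > 0" and K: "K > 0" and h: "h > 0"
begin

abbreviation "Q \<equiv> Qop N TL TR K"
abbreviation "wt k \<equiv> ennreal (exp (- (Lam N K * h)) * (Lam N K * h) ^ k / fact k)"

lemma Pt_alt: "Pt N TL TR K h f E = (\<Sum>k. wt k * (Q ^^ k) f E)"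
  unfolding Pt_def by simp

lemma lam_nonneg: "0 \<le> Lam N K * h" using K h by (simp add: Lam_def)

lemma Qpow_meas[measurable]: "f \<in> borel_measurable S \<Longrightarrow> (Q ^^ k) f \<in> borel_measurable S"
  by (induction k) (auto intro: Qop_meas TL TR)

lemma Qpow_add: "f \<in> borel_measurable S \<Longrightarrow> g \<in> borel_measurable S \<Longrightarrow>
    (Q ^^ k) (\<lambda>x. f x + g x) E = (Q ^^ k) f E + (Q ^^ k) g E"
proof (induction k arbitrary: E)
  case (Suc k)
  have e: "(Q ^^ k) (\<lambda>x. f x + g x) = (\<lambda>x. (Q ^^ k) f x + (Q ^^ k) g x)"
    using Suc by (simp add: fun_eq_iff)
  show ?case by (simp only: funpow.simps comp_def e) (rule Qop_add, auto simp: Qpow_meas TL TR Suc.prems)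
qed simp

lemma Qpow_cmult: "f \<in> borel_measurable S \<Longrightarrow> (Q ^^ k) (\<lambda>x. c * f x) E = c * (Q ^^ k) f E"
proof (induction k arbitrary: E)
  case (Suc k)
  have e: "(Q ^^ k) (\<lambda>x. c * f x) = (\<lambda>x. c * (Q ^^ k) f x)"
    using Suc by (simp add: fun_eq_iff)
  show ?case by (simp only: funpow.simps comp_def e) (rule Qop_cmult, auto simp: Qpow_meas TL TR Suc.prems)
qed simp

lemma Qpow_mono: "inOrth N E \<Longrightarrow> (\<And>z. inOrth N z \<Longrightarrow> f z \<le> g z) \<Longrightarrow> (Q ^^ k) f E \<le> (Q ^^ k) g E"
proof (induction k arbitrary: E)
  case (Suc k)
  show ?case by (simp only: funpow.simps comp_def) (rule Qop_mono[OF Suc.prems(1) _ N], rule Suc.IH, auto simp: Suc.prems)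
qed simp

lemma Pt_meas[measurable]: "f \<in> borel_measurable S \<Longrightarrow> Pt N TL TR K h f \<in> borel_measurable S"
  unfolding Pt_def by measurable

lemma Pt_add: "f \<in> borel_measurable S \<Longrightarrow> g \<in> borel_measurable S \<Longrightarrow>
    Pt N TL TR K h (\<lambda>x. f x + g x) E = Pt N TL TR K h f E + Pt N TL TR K h g E"
  unfolding Pt_alt Qpow_add by (simp add: distrib_left suminf_add[symmetric])

lemma Pt_cmult: "f \<in> borel_measurable S \<Longrightarrow> Pt N TL TR K h (\<lambda>x. c * f x) E = c * Pt N TL TR K h f E"
  unfolding Pt_alt Qpow_cmult by (simp add: mult.left_commute[of _ c] ennreal_suminf_cmult)

lemma Pt_mono: "inOrth N E \<Longrightarrow> (\<And>z. inOrth N z \<Longrightarrow> f z \<le> g z) \<Longrightarrow> Pt N TL TR K h f E \<le> Pt N TL TR K h g E"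
  unfolding Pt_alt by (rule suminf_le) (auto intro!: mult_left_mono Qpow_mono summableI)

lemma Qpow_one: "inOrth N E \<Longrightarrow> (Q ^^ k) (\<lambda>_. 1) E \<le> 1"
proof (induction k arbitrary: E)
  case (Suc k)
  have "(Q ^^ Suc k) (\<lambda>_. 1) E = Q ((Q ^^ k) (\<lambda>_. 1)) E" by simp
  also have "\<dots> \<le> Q (\<lambda>_. 1) E" by (rule Qop_mono[OF Suc.prems _ N]) (rule Suc.IH)
  also have "\<dots> \<le> 1" by (rule Qop_one[OF Suc.prems N K TL TR])
  finally show ?case .
qed simp

lemma Pt_one: "inOrth N E \<Longrightarrow> Pt N TL TR K h (\<lambda>_. 1) E \<le> 1"
proof -
  assume E: "inOrth N E"
  have "Pt N TL TR K h (\<lambda>_. 1) E \<le> (\<Sum>k. wt k * ennreal (1 ^ k))"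
    unfolding Pt_alt by (rule suminf_le) (use mult_left_mono[OF Qpow_one[OF E]] in \<open>auto intro: summableI\<close>)
  also have "\<dots> = ennreal (exp (Lam N K * h * (1 - 1)))" by (rule poisson_mgf[OF zero_le_one lam_nonneg])
  also have "\<dots> = 1" by simp
  finally show ?thesis .
qed

lemma Pt_V:
  assumes E: "inOrth N E" and eta: "0 < \<eta>" "\<eta> < 1"
  shows "Pt N TL TR K h (\<lambda>y. ennreal (Vf N \<eta> y)) E
     \<le> ennreal (exp (Lam N K * h * (2 / (aexp N N * \<eta>) - 1)) * Vf N \<eta> E)"
proof -
  define c where "c = 2 / (aexp N N * \<eta>)"
  have c0: "0 \<le> c" using aexp_pos[OF N] eta by (simp add: c_def)
  have Qk: "(Q ^^ k) (\<lambda>y. ennreal (Vf N \<eta> y)) E \<le> ennreal (c ^ k) * ennreal (Vf N \<eta> E)" if "inOrth N E" for k E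
    using that
  proof (induction k arbitrary: E)
    case (Suc k)
    have "(Q ^^ Suc k) (\<lambda>y. ennreal (Vf N \<eta> y)) E = Q ((Q ^^ k) (\<lambda>y. ennreal (Vf N \<eta> y))) E" by simp
    also have "\<dots> \<le> Q (\<lambda>y. ennreal (c ^ k) * ennreal (Vf N \<eta> y)) E" by (rule Qop_mono[OF Suc.prems _ N]) (rule Suc.IH)
    also have "\<dots> = ennreal (c ^ k) * Q (\<lambda>y. ennreal (Vf N \<eta> y)) E" by (rule Qop_cmult) (auto simp: TL TR)
    also have "\<dots> \<le> ennreal (c ^ k) * ennreal (c * Vf N \<eta> E)"
      unfolding c_def by (rule mult_left_mono[OF Qop_V[OF Suc.prems N K TL TR eta]]) simp
    also have "\<dots> = ennreal (c ^ Suc k) * ennreal (Vf N \<eta> E)"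
    proof -
      have "c ^ k * (c * Vf N \<eta> E) = c ^ Suc k * Vf N \<eta> E" by simp
      then show ?thesis using c0 Vf_nonneg[of N \<eta> E]
        by (metis ennreal_mult mult_nonneg_nonneg zero_le_power)
    qed
    finally show ?case .
  qed simp
  have "Pt N TL TR K h (\<lambda>y. ennreal (Vf N \<eta> y)) E \<le> (\<Sum>k. wt k * ennreal (c ^ k) * ennreal (Vf N \<eta> E))"
    unfolding Pt_alt by (rule suminf_le) (use mult_left_mono[OF Qk[OF E]] in \<open>auto simp: mult.assoc intro: summableI\<close>)
  also have "\<dots> = (\<Sum>k. wt k * ennreal (c ^ k)) * ennreal (Vf N \<eta> E)"
    by (rule ennreal_suminf_multc)
  also have "\<dots> = ennreal (exp (Lam N K * h * (c - 1))) * ennreal (Vf N \<eta> E)"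
    by (simp only: poisson_mgf[OF c0 lam_nonneg])
  also have "\<dots> = ennreal (exp (Lam N K * h * (c - 1)) * Vf N \<eta> E)"
    by (rule ennreal_mult[symmetric]) (auto simp: Vf_nonneg)
  finally show ?thesis unfolding c_def .
qed

lemma Pt_W:
  assumes E: "inOrth N E"
  shows "Pt N TL TR K h (\<lambda>y. ennreal (Wf N y)) E
     \<le> ennreal (Wf N E + (TL + TR) * exp (Lam N K * h))"
proof -
  define b where "b = TL + TR"
  have b0: "0 \<le> b" using TL TR by (simp add: b_def)
  have Qk: "(Q ^^ k) (\<lambda>y. ennreal (Wf N y)) E \<le> ennreal (Wf N E) + ennreal (real k * b)" if "inOrth N E" for k E
    using that
  proof (induction k arbitrary: E)
    case (Suc k)
    have "(Q ^^ Suc k) (\<lambda>y. ennreal (Wf N y)) E = Q ((Q ^^ k) (\<lambda>y. ennreal (Wf N y))) E" by simp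
    also have "\<dots> \<le> Q (\<lambda>y. ennreal (Wf N y) + ennreal (real k * b) * 1) E" by (rule Qop_mono[OF Suc.prems _ N]) (simp add: Suc.IH)
    also have "\<dots> = Q (\<lambda>y. ennreal (Wf N y)) E + ennreal (real k * b) * Q (\<lambda>_. 1) E"
    proof -
      have "Q (\<lambda>y. ennreal (Wf N y) + ennreal (real k * b) * 1) E = Q (\<lambda>y. ennreal (Wf N y)) E + Q (\<lambda>y. ennreal (real k * b) * 1) E"
        by (rule Qop_add) (auto simp: TL TR)
      moreover have "Q (\<lambda>y. ennreal (real k * b) * 1) E = ennreal (real k * b) * Q (\<lambda>_. 1) E"
        by (rule Qop_cmult) (auto simp: TL TR)
      ultimately show ?thesis by simp
    qed
    also have "\<dots> \<le> ennreal (Wf N E + b) + ennreal (real k * b) * 1"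
      unfolding b_def using Suc Qop_W[OF Suc.prems N K TL TR] Qop_one[OF Suc.prems N K TL TR]
      by (intro add_mono mult_left_mono) (auto simp: add.assoc)
    also have "\<dots> = ennreal (Wf N E) + ennreal (real (Suc k) * b)"
      using b0 Wf_nonneg[OF Suc.prems] by (simp add: ennreal_plus[symmetric] algebra_simps del: ennreal_plus)
    finally show ?case .
  qed simp
  have kb: "ennreal (Wf N E) + ennreal (real k * b) \<le> ennreal (Wf N E) * ennreal (1 ^ k) + ennreal b * ennreal (2 ^ k)" for k
  proof -
    have "real k \<le> 2 ^ k"
    proof (induction k)
      case (Suc k)
      have "(1::real) \<le> 2 ^ k" by simp
      with Suc have "1 + real k \<le> 2 * 2 ^ k" by linarith
      then show ?case by simp
    qed simp
    then have "real k * b \<le> b * 2 ^ k" using b0 by (simp add: mult.commute mult_left_mono)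
    then show ?thesis using b0 by (simp add: ennreal_mult[symmetric] ennreal_leI add_left_mono)
  qed
  define A where "A = ennreal (Wf N E)"
  define B where "B = ennreal b"
  have "Pt N TL TR K h (\<lambda>y. ennreal (Wf N y)) E \<le> (\<Sum>k. wt k * (A * ennreal (1 ^ k) + B * ennreal (2 ^ k)))"
    unfolding Pt_alt A_def B_def by (rule suminf_le) (use mult_left_mono[OF order_trans[OF Qk[OF E] kb]] in \<open>auto intro: summableI\<close>)
  also have "\<dots> = (\<Sum>k. A * (wt k * ennreal (1 ^ k)) + B * (wt k * ennreal (2 ^ k)))"
    by (intro suminf_cong) (simp only: distrib_left mult.left_commute)
  also have "\<dots> = (\<Sum>k. A * (wt k * ennreal (1 ^ k))) + (\<Sum>k. B * (wt k * ennreal (2 ^ k)))"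
    by (rule suminf_add[symmetric]) (auto intro: summableI)
  also have "\<dots> = A * (\<Sum>k. wt k * ennreal (1 ^ k)) + B * (\<Sum>k. wt k * ennreal (2 ^ k))"
    by (simp only: ennreal_suminf_cmult)
  also have "\<dots> = A * ennreal (exp (Lam N K * h * (1 - 1))) + B * ennreal (exp (Lam N K * h * (2 - 1)))"
    by (simp only: poisson_mgf[OF _ lam_nonneg] zero_le_one zero_le_numeral)
  also have "\<dots> = ennreal (Wf N E + b * exp (Lam N K * h))"
    using b0 Wf_nonneg[OF E] unfolding A_def B_def
    by (simp add: ennreal_mult[symmetric] ennreal_plus[symmetric] del: ennreal_plus)
  finally show ?thesis unfolding b_def .
qed

end

primrec svP :: "((state \<Rightarrow> ennreal) \<Rightarrow> state \<Rightarrow> ennreal) \<Rightarrow> state set \<Rightarrow> nat \<Rightarrow> state \<Rightarrow> ennreal" where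
  "svP P A 0 = (\<lambda>E. 1)"
| "svP P A (Suc n) = P (\<lambda>y. indicator (- A) y * svP P A n y)"

fun hitP :: "((state \<Rightarrow> ennreal) \<Rightarrow> state \<Rightarrow> ennreal) \<Rightarrow> state set \<Rightarrow> (state \<Rightarrow> ennreal) \<Rightarrow> nat \<Rightarrow> state \<Rightarrow> ennreal" where
  "hitP P G f 0 = (\<lambda>E. 0)"
| "hitP P G f (Suc 0) = P (\<lambda>y. indicator G y * f y)"
| "hitP P G f (Suc (Suc k)) = P (\<lambda>y. indicator (- G) y * hitP P G f (Suc k) y)"

primrec twP :: "((state \<Rightarrow> ennreal) \<Rightarrow> state \<Rightarrow> ennreal) \<Rightarrow> state set \<Rightarrow> (state \<Rightarrow> ennreal) \<Rightarrow> nat \<Rightarrow> state \<Rightarrow> ennreal" where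
  "twP P G f 0 = f"
| "twP P G f (Suc n) = P (\<lambda>y. indicator (- G) y * twP P G f n y)"

lemma sum_split_add: "(\<Sum>j<a + d. f j) = (\<Sum>j<a. f j) + (\<Sum>i<d. f (a + i))"
  for f :: "nat \<Rightarrow> 'a::comm_monoid_add"
  by (induction d) (auto simp: add.assoc)

locale mk =
  fixes P :: "(state \<Rightarrow> ennreal) \<Rightarrow> state \<Rightarrow> ennreal" and Om :: "state set"
  assumes P_meas: "f \<in> borel_measurable S \<Longrightarrow> P f \<in> borel_measurable S"
    and P_add: "f \<in> borel_measurable S \<Longrightarrow> g \<in> borel_measurable S \<Longrightarrow> P (\<lambda>x. f x + g x) x = P f x + P g x"
    and P_cmult: "f \<in> borel_measurable S \<Longrightarrow> P (\<lambda>x. c * f x) x = c * P f x"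
    and P_mono: "x \<in> Om \<Longrightarrow> (\<And>z. z \<in> Om \<Longrightarrow> f z \<le> g z) \<Longrightarrow> P f x \<le> P g x"
    and P_one: "x \<in> Om \<Longrightarrow> P (\<lambda>_. 1) x \<le> 1"
begin

lemma P_zero: "P (\<lambda>_. 0) x = 0"
  using P_cmult[of "\<lambda>_. 0" 0 x] by simp

lemma P_sum: "finite I \<Longrightarrow> (\<And>i. i \<in> I \<Longrightarrow> f i \<in> borel_measurable S) \<Longrightarrow>
   P (\<lambda>x. \<Sum>i\<in>I. f i x) x = (\<Sum>i\<in>I. P (f i) x)"
proof (induction I rule: finite_induct)
  case empty then show ?case by (simp add: P_zero)
next
  case (insert a I)
  have "P (\<lambda>x. \<Sum>i\<in>insert a I. f i x) x = P (\<lambda>x. f a x + (\<Sum>i\<in>I. f i x)) x"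
    using insert by simp
  also have "\<dots> = P (f a) x + P (\<lambda>x. \<Sum>i\<in>I. f i x) x"
    using insert by (intro P_add) auto
  finally show ?case using insert by simp
qed

lemma ind_meas[measurable]: "A \<in> sets S \<Longrightarrow> (\<lambda>y. indicator A y :: ennreal) \<in> borel_measurable S"
  using borel_measurable_indicator[of A S] by simp
lemma compl_sets: "A \<in> sets S \<Longrightarrow> - A \<in> sets S"
  using sets.compl_sets[of A S] by (simp add: Compl_eq_Diff_UNIV)

lemma sv_meas[measurable]: "A \<in> sets S \<Longrightarrow> svP P A n \<in> borel_measurable S"
  by (induction n) (auto intro!: P_meas borel_measurable_times_ennreal ind_meas compl_sets)

lemma hit_meas[measurable]: "G \<in> sets S \<Longrightarrow> f \<in> borel_measurable S \<Longrightarrow> hitP P G f k \<in> borel_measurable S"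
proof (induction k)
  case (Suc k)
  then show ?case by (cases k) (auto intro!: P_meas borel_measurable_times_ennreal ind_meas compl_sets)
qed simp

lemma tw_meas[measurable]: "G \<in> sets S \<Longrightarrow> f \<in> borel_measurable S \<Longrightarrow> twP P G f n \<in> borel_measurable S"
  by (induction n) (auto intro!: P_meas borel_measurable_times_ennreal ind_meas compl_sets)

lemma sv_le1: "x \<in> Om \<Longrightarrow> svP P A n x \<le> 1"
proof (induction n arbitrary: x)
  case (Suc n)
  have "svP P A (Suc n) x \<le> P (\<lambda>_. 1) x"
    using Suc by (simp, intro P_mono) (auto simp: indicator_def)
  then show ?case using P_one[OF Suc.prems] by simp
qed simp

lemma hit_mono: "x \<in> Om \<Longrightarrow> (\<And>z. z \<in> Om \<Longrightarrow> z \<in> G \<Longrightarrow> f z \<le> g z) \<Longrightarrow> hitP P G f k x \<le> hitP P G g k x"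
proof (induction k arbitrary: x)
  case (Suc k)
  show ?case
  proof (cases k)
    case 0
    then show ?thesis using Suc.prems by (simp, intro P_mono) (auto simp: indicator_def)
  next
    case (Suc k')
    then show ?thesis using Suc.IH Suc.prems by (simp, intro P_mono) (auto simp: indicator_def intro: mult_left_mono)
  qed
qed simp

lemma hit_cmult: "G \<in> sets S \<Longrightarrow> f \<in> borel_measurable S \<Longrightarrow> hitP P G (\<lambda>x. c * f x) k x = c * hitP P G f k x"
proof (induction k arbitrary: x)
  case (Suc k)
  show ?case
  proof (cases k)
    case 0
    have "hitP P G (\<lambda>x. c * f x) (Suc k) x = P (\<lambda>y. c * (indicator G y * f y)) x"
      using 0 by (simp add: mult.left_commute)
    also have "\<dots> = c * P (\<lambda>y. indicator G y * f y) x" using Suc.prems by (intro P_cmult) measurable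
    finally show ?thesis using 0 by simp
  next
    case (Suc k')
    have e: "hitP P G (\<lambda>x. c * f x) k = (\<lambda>x. c * hitP P G f k x)" using Suc.IH[OF \<open>G \<in> sets S\<close> \<open>f \<in> _\<close>] by auto
    have "hitP P G (\<lambda>x. c * f x) (Suc k) x = P (\<lambda>y. c * (indicator (- G) y * hitP P G f k y)) x"
      using Suc e by (simp add: mult.left_commute)
    also have "\<dots> = c * P (\<lambda>y. indicator (- G) y * hitP P G f k y) x"
      using Suc.prems by (intro P_cmult borel_measurable_times_ennreal ind_meas compl_sets hit_meas) auto
    finally show ?thesis using Suc by simp
  qed
qed simp

lemma ident:
  assumes G: "G \<in> sets S" and C: "C \<in> sets S" and CG: "C \<subseteq> G"
  shows "svP P C n x = svP P G n x + (\<Sum>j<n. hitP P G (\<lambda>y. indicator (- C) y * svP P C (n - Suc j) y) (Suc j) x)"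
proof (induction n arbitrary: x)
  case 0 then show ?case by simp
next
  case (Suc n)
  define g where "g m = (\<lambda>y. indicator (- C) y * svP P C m y)" for m
  have gm[measurable]: "g m \<in> borel_measurable S" for m unfolding g_def using C by (intro borel_measurable_times_ennreal ind_meas compl_sets sv_meas)
  have hm[measurable]: "hitP P G (g m) k \<in> borel_measurable S" for m k using G gm by (rule hit_meas)
  have IH: "svP P C n y = svP P G n y + (\<Sum>j<n. hitP P G (g (n - Suc j)) (Suc j) y)" for y
    using Suc.IH unfolding g_def by simp
  have pw: "indicator (- C) y * svP P C n y =
      indicator G y * g n y + (indicator (- G) y * svP P G n y
        + (\<Sum>j<n. indicator (- G) y * hitP P G (g (n - Suc j)) (Suc j) y))" for y
    using CG unfolding g_def IH by (auto simp: indicator_def sum_distrib_left)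
  have m1: "(\<lambda>y. indicator G y * g n y) \<in> borel_measurable S" using G by measurable
  have m2: "(\<lambda>y. indicator (- G) y * svP P G n y) \<in> borel_measurable S" using G by (intro borel_measurable_times_ennreal ind_meas compl_sets sv_meas)
  have m3: "(\<lambda>y. indicator (- G) y * hitP P G (g m) k y) \<in> borel_measurable S" for m k
    using G by (intro borel_measurable_times_ennreal ind_meas compl_sets hm)
  have m4: "(\<lambda>y. \<Sum>j<n. indicator (- G) y * hitP P G (g (n - Suc j)) (Suc j) y) \<in> borel_measurable S"
    using m3 by (intro borel_measurable_sum) auto
  have "svP P C (Suc n) x = P (\<lambda>y. indicator (- C) y * svP P C n y) x" by simp
  also have "\<dots> = P (\<lambda>y. indicator G y * g n y + (indicator (- G) y * svP P G n y
        + (\<Sum>j<n. indicator (- G) y * hitP P G (g (n - Suc j)) (Suc j) y))) x"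
    by (simp only: pw)
  also have "\<dots> = P (\<lambda>y. indicator G y * g n y) x + P (\<lambda>y. indicator (- G) y * svP P G n y
        + (\<Sum>j<n. indicator (- G) y * hitP P G (g (n - Suc j)) (Suc j) y)) x"
    by (rule P_add[OF m1 borel_measurable_add[OF m2 m4]])
  also have "P (\<lambda>y. indicator (- G) y * svP P G n y
        + (\<Sum>j<n. indicator (- G) y * hitP P G (g (n - Suc j)) (Suc j) y)) x
      = P (\<lambda>y. indicator (- G) y * svP P G n y) x + P (\<lambda>y. \<Sum>j<n. indicator (- G) y * hitP P G (g (n - Suc j)) (Suc j) y) x"
    by (rule P_add[OF m2 m4])
  also have "P (\<lambda>y. \<Sum>j<n. indicator (- G) y * hitP P G (g (n - Suc j)) (Suc j) y) x
      = (\<Sum>j<n. P (\<lambda>y. indicator (- G) y * hitP P G (g (n - Suc j)) (Suc j) y) x)"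
    using m3 by (intro P_sum) auto
  also have "\<dots> = (\<Sum>j<n. hitP P G (g (n - Suc j)) (Suc (Suc j)) x)" by simp
  finally have "svP P C (Suc n) x = hitP P G (g n) (Suc 0) x + (svP P G (Suc n) x + (\<Sum>j<n. hitP P G (g (Suc n - Suc (Suc j))) (Suc (Suc j)) x))"
    by simp
  moreover have "(\<Sum>j<Suc n. hitP P G (g (Suc n - Suc j)) (Suc j) x) = hitP P G (g n) (Suc 0) x + (\<Sum>j<n. hitP P G (g (Suc n - Suc (Suc j))) (Suc (Suc j)) x)"
    by (subst sum.lessThan_Suc_shift) simp
  ultimately show ?case unfolding g_def by (simp add: algebra_simps)
qed

lemma hits_one_le:
  assumes G: "G \<in> sets S" and x: "x \<in> Om"
  shows "(\<Sum>j<J. hitP P G (\<lambda>_. 1) (Suc j) x) + svP P G J x \<le> 1"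
  using x
proof (induction J arbitrary: x)
  case 0 then show ?case by simp
next
  case (Suc J)
  have hm[measurable]: "hitP P G (\<lambda>_. 1) k \<in> borel_measurable S" for k using G by (intro hit_meas) auto
  have m3: "(\<lambda>y. indicator (- G) y * hitP P G (\<lambda>_. 1) k y) \<in> borel_measurable S" for k
    using G by (intro borel_measurable_times_ennreal ind_meas compl_sets hm)
  have m2: "(\<lambda>y. indicator (- G) y * svP P G J y) \<in> borel_measurable S" using G by (intro borel_measurable_times_ennreal ind_meas compl_sets sv_meas)
  have m1: "(\<lambda>y. indicator G y * 1 :: ennreal) \<in> borel_measurable S" using G by measurable
  have m4: "(\<lambda>y. \<Sum>j<J. indicator (- G) y * hitP P G (\<lambda>_. 1) (Suc j) y) \<in> borel_measurable S"
    using m3 by (intro borel_measurable_sum) auto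
  have s1: "(\<Sum>j<J. P (\<lambda>y. indicator (- G) y * hitP P G (\<lambda>_. 1) (Suc j) y) x)
      = P (\<lambda>y. \<Sum>j<J. indicator (- G) y * hitP P G (\<lambda>_. 1) (Suc j) y) x"
    using m3 by (intro P_sum[symmetric]) auto
  have e1: "P (\<lambda>y. indicator G y * 1 + (\<Sum>j<J. indicator (- G) y * hitP P G (\<lambda>_. 1) (Suc j) y)
        + indicator (- G) y * svP P G J y) x
     = P (\<lambda>y. indicator G y * 1 + (\<Sum>j<J. indicator (- G) y * hitP P G (\<lambda>_. 1) (Suc j) y)) x
        + P (\<lambda>y. indicator (- G) y * svP P G J y) x"
    by (rule P_add[OF borel_measurable_add[OF m1 m4] m2])
  have e2: "P (\<lambda>y. indicator G y * 1 + (\<Sum>j<J. indicator (- G) y * hitP P G (\<lambda>_. 1) (Suc j) y)) x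
     = P (\<lambda>y. indicator G y * 1) x + P (\<lambda>y. \<Sum>j<J. indicator (- G) y * hitP P G (\<lambda>_. 1) (Suc j) y) x"
    by (rule P_add[OF m1 m4])
  have "(\<Sum>j<Suc J. hitP P G (\<lambda>_. 1) (Suc j) x) + svP P G (Suc J) x
      = P (\<lambda>y. indicator G y * 1) x + (\<Sum>j<J. P (\<lambda>y. indicator (- G) y * hitP P G (\<lambda>_. 1) (Suc j) y) x)
        + P (\<lambda>y. indicator (- G) y * svP P G J y) x"
    by (subst sum.lessThan_Suc_shift) simp
  also have "\<dots> = P (\<lambda>y. indicator G y * 1 + (\<Sum>j<J. indicator (- G) y * hitP P G (\<lambda>_. 1) (Suc j) y)
        + indicator (- G) y * svP P G J y) x"
    unfolding e1 e2 s1 ..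
  also have "\<dots> \<le> P (\<lambda>_. 1) x"
  proof (rule P_mono[OF Suc.prems])
    fix z assume z: "z \<in> Om"
    show "indicator G z * 1 + (\<Sum>j<J. indicator (- G) z * hitP P G (\<lambda>_. 1) (Suc j) z) + indicator (- G) z * svP P G J z \<le> 1"
      using Suc.IH[OF z] by (auto simp: indicator_def)
  qed
  also have "\<dots> \<le> 1" by (rule P_one[OF Suc.prems])
  finally show ?case .
qed

lemma hits_tail:
  assumes G: "G \<in> sets S" and x: "x \<in> Om"
  shows "(\<Sum>j<J. hitP P G (\<lambda>_. 1) (Suc (m + j)) x) \<le> svP P G m x"
  using x
proof (induction m arbitrary: x)
  case 0
  have "(\<Sum>j<J. hitP P G (\<lambda>_. 1) (Suc j) x) \<le> 1"
    by (rule order_trans[OF _ hits_one_le[OF G 0, of J]]) simp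
  then show ?case by simp
next
  case (Suc m)
  have hm[measurable]: "hitP P G (\<lambda>_. 1) k \<in> borel_measurable S" for k using G by (intro hit_meas) auto
  have m3: "(\<lambda>y. indicator (- G) y * hitP P G (\<lambda>_. 1) k y) \<in> borel_measurable S" for k
    using G by (intro borel_measurable_times_ennreal ind_meas compl_sets hm)
  have "(\<Sum>j<J. hitP P G (\<lambda>_. 1) (Suc (Suc m + j)) x) = (\<Sum>j<J. P (\<lambda>y. indicator (- G) y * hitP P G (\<lambda>_. 1) (Suc (m + j)) y) x)"
    by simp
  also have "\<dots> = P (\<lambda>y. \<Sum>j<J. indicator (- G) y * hitP P G (\<lambda>_. 1) (Suc (m + j)) y) x"
    using m3 by (intro P_sum[symmetric]) auto
  also have "\<dots> \<le> P (\<lambda>y. indicator (- G) y * svP P G m y) x"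
    using Suc.IH by (intro P_mono[OF Suc.prems]) (auto simp: sum_distrib_left[symmetric] intro: mult_left_mono)
  finally show ?case by simp
qed

lemma hits_W:
  assumes G: "G \<in> sets S" and Wm[measurable]: "W \<in> borel_measurable S"
    and PW: "\<And>x. x \<in> Om \<Longrightarrow> P W x \<le> W x + b" and x: "x \<in> Om"
  shows "(\<Sum>j<J. hitP P G W (Suc j) x) + twP P G W J x \<le> W x + b * (\<Sum>j<J. svP P G j x)"
  using x
proof (induction J arbitrary: x)
  case 0 then show ?case by simp
next
  case (Suc J)
  have hm[measurable]: "hitP P G W k \<in> borel_measurable S" for k using G by (intro hit_meas) auto
  have m3: "(\<lambda>y. indicator (- G) y * hitP P G W k y) \<in> borel_measurable S" for k
    using G by (intro borel_measurable_times_ennreal ind_meas compl_sets hm)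
  have m2: "(\<lambda>y. indicator (- G) y * twP P G W J y) \<in> borel_measurable S" using G by (intro borel_measurable_times_ennreal ind_meas compl_sets tw_meas Wm)
  have m1: "(\<lambda>y. indicator G y * W y) \<in> borel_measurable S" using G by measurable
  have m4: "(\<lambda>y. \<Sum>j<J. indicator (- G) y * hitP P G W (Suc j) y) \<in> borel_measurable S"
    using m3 by (intro borel_measurable_sum) auto
  have m5: "(\<lambda>y. indicator (- G) y * svP P G j y) \<in> borel_measurable S" for j
    using G by (intro borel_measurable_times_ennreal ind_meas compl_sets sv_meas)
  have m6: "(\<lambda>y. \<Sum>j<J. indicator (- G) y * svP P G j y) \<in> borel_measurable S"
    using m5 by (intro borel_measurable_sum) auto
  have s1: "(\<Sum>j<J. P (\<lambda>y. indicator (- G) y * hitP P G W (Suc j) y) x)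
      = P (\<lambda>y. \<Sum>j<J. indicator (- G) y * hitP P G W (Suc j) y) x"
    using m3 by (intro P_sum[symmetric]) auto
  have e1: "P (\<lambda>y. indicator G y * W y + (\<Sum>j<J. indicator (- G) y * hitP P G W (Suc j) y)
        + indicator (- G) y * twP P G W J y) x
     = P (\<lambda>y. indicator G y * W y + (\<Sum>j<J. indicator (- G) y * hitP P G W (Suc j) y)) x
        + P (\<lambda>y. indicator (- G) y * twP P G W J y) x"
    by (rule P_add[OF borel_measurable_add[OF m1 m4] m2])
  have e2: "P (\<lambda>y. indicator G y * W y + (\<Sum>j<J. indicator (- G) y * hitP P G W (Suc j) y)) x
     = P (\<lambda>y. indicator G y * W y) x + P (\<lambda>y. \<Sum>j<J. indicator (- G) y * hitP P G W (Suc j) y) x"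
    by (rule P_add[OF m1 m4])
  have "(\<Sum>j<Suc J. hitP P G W (Suc j) x) + twP P G W (Suc J) x
      = P (\<lambda>y. indicator G y * W y) x + (\<Sum>j<J. P (\<lambda>y. indicator (- G) y * hitP P G W (Suc j) y) x)
        + P (\<lambda>y. indicator (- G) y * twP P G W J y) x"
    by (subst sum.lessThan_Suc_shift) simp
  also have "\<dots> = P (\<lambda>y. indicator G y * W y + (\<Sum>j<J. indicator (- G) y * hitP P G W (Suc j) y)
        + indicator (- G) y * twP P G W J y) x"
    unfolding e1 e2 s1 ..
  also have "\<dots> \<le> P (\<lambda>y. W y + b * (\<Sum>j<J. indicator (- G) y * svP P G j y)) x"
  proof (rule P_mono[OF Suc.prems])
    fix z assume z: "z \<in> Om"
    show "indicator G z * W z + (\<Sum>j<J. indicator (- G) z * hitP P G W (Suc j) z) + indicator (- G) z * twP P G W J z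
        \<le> W z + b * (\<Sum>j<J. indicator (- G) z * svP P G j z)"
      using Suc.IH[OF z] by (auto simp: indicator_def)
  qed
  also have "\<dots> = P W x + b * (\<Sum>j<J. P (\<lambda>y. indicator (- G) y * svP P G j y) x)"
  proof -
    have "P (\<lambda>y. W y + b * (\<Sum>j<J. indicator (- G) y * svP P G j y)) x
        = P W x + P (\<lambda>y. b * (\<Sum>j<J. indicator (- G) y * svP P G j y)) x"
      by (rule P_add[OF Wm borel_measurable_times_ennreal[OF borel_measurable_const m6]])
    also have "P (\<lambda>y. b * (\<Sum>j<J. indicator (- G) y * svP P G j y)) x = b * P (\<lambda>y. \<Sum>j<J. indicator (- G) y * svP P G j y) x"
      by (rule P_cmult[OF m6])
    also have "P (\<lambda>y. \<Sum>j<J. indicator (- G) y * svP P G j y) x = (\<Sum>j<J. P (\<lambda>y. indicator (- G) y * svP P G j y) x)"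
      using m5 by (intro P_sum) auto
    finally show ?thesis .
  qed
  also have "\<dots> = P W x + b * (\<Sum>j<J. svP P G (Suc j) x)" by simp
  also have "\<dots> \<le> W x + b + b * (\<Sum>j<J. svP P G (Suc j) x)"
    using PW[OF Suc.prems] by (intro add_right_mono)
  also have "\<dots> = W x + b * (\<Sum>j<Suc J. svP P G j x)"
    by (subst sum.lessThan_Suc_shift) (simp add: distrib_left add.assoc)
  finally show ?case .
qed

end

lemma mvt_powr:
  fixes m g :: real assumes m: "m > 0" and g: "g \<ge> 1"
  shows "(m + 1) powr g - m powr g \<le> g * (m + 1) powr (g - 1)"
proof -
  have "\<exists>z. m < z \<and> z < m + 1 \<and> (m + 1) powr g - m powr g = (m + 1 - m) * (g * z powr (g - 1))"
    using m by (intro MVT2) (auto intro!: has_real_derivative_powr)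
  then obtain z where z: "m < z" "z < m + 1" and e: "(m + 1) powr g - m powr g = g * z powr (g - 1)" by auto
  have "z powr (g - 1) \<le> (m + 1) powr (g - 1)" using z m g by (intro powr_mono2) auto
  then show ?thesis unfolding e using g by simp
qed

lemma tail_real:
  fixes g c0 KP v r m :: real
  assumes g: "g \<ge> 1" and c0: "c0 > 0" and KP: "KP \<ge> (g / c0) powr g" "KP > 0"
    and v: "v > 0" and m: "m \<ge> 1" and r: "r \<ge> 0" and drift: "r + c0 * v powr (1 - 1 / g) \<le> v"
    and small: "KP * v * (m + 1) powr (- g) < 1"
  shows "KP * m powr (- g) * r \<le> KP * v * (m + 1) powr (- g)"
proof -
  define M where "M = m + 1"
  have M: "M > 0" "M \<ge> 1" using m by (auto simp: M_def)
  have Mg: "M powr g > 0" using M by simp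
  have "KP * v < M powr g"
    using small Mg by (simp add: M_def powr_minus field_simps)
  moreover have "(g / c0) powr g * v \<le> KP * v" using KP v by (intro mult_right_mono) auto
  ultimately have "(g / c0) powr g * v < M powr g" by linarith
  then have "v < M powr g / (g / c0) powr g" using g c0 by (simp add: field_simps)
  also have "\<dots> = (M * c0 / g) powr g" using M g c0 by (simp add: powr_divide powr_mult)
  finally have vlt: "v < (M * c0 / g) powr g" .
  have "v powr (1 / g) < ((M * c0 / g) powr g) powr (1 / g)"
    using vlt v g by (intro powr_less_mono2) auto
  also have "\<dots> = M * c0 / g" using M c0 g by (simp add: powr_powr)
  finally have v1: "g * v powr (1 / g) < M * c0" using g by (simp add: field_simps)
  have vsplit: "v = v powr (1 - 1 / g) * v powr (1 / g)"
    using v by (simp add: powr_add[symmetric])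
  have va: "v powr (1 - 1 / g) > 0" using v by simp
  have gv: "g * v \<le> c0 * v powr (1 - 1 / g) * M"
  proof -
    have "g * v = v powr (1 - 1 / g) * (g * v powr (1 / g))" by (subst vsplit) (simp add: algebra_simps)
    also have "\<dots> \<le> v powr (1 - 1 / g) * (M * c0)" using v1 va by (intro mult_left_mono) auto
    finally show ?thesis by (simp add: algebra_simps)
  qed
  have mv: "M powr g - m powr g \<le> g * M powr (g - 1)"
    unfolding M_def using m g by (intro mvt_powr) auto
  have "v * (M powr g - m powr g) \<le> v * (g * M powr (g - 1))" using mv v by (intro mult_left_mono) auto
  also have "\<dots> = (g * v) * M powr (g - 1)" by simp
  also have "\<dots> \<le> (c0 * v powr (1 - 1 / g) * M) * M powr (g - 1)"
    using gv M by (intro mult_right_mono) auto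
  also have "\<dots> = c0 * v powr (1 - 1 / g) * M powr g"
    using M by (simp add: powr_add[symmetric] mult.assoc powr_mult_base)
  finally have key: "(v - c0 * v powr (1 - 1 / g)) * M powr g \<le> v * m powr g" by (simp add: algebra_simps)
  have "r * M powr g \<le> (v - c0 * v powr (1 - 1 / g)) * M powr g"
    using drift Mg by (intro mult_right_mono) auto
  with key have rk: "r * M powr g \<le> v * m powr g" by linarith
  have mg: "m powr g > 0" using m by simp
  have "m powr (- g) * r \<le> v * M powr (- g)"
    using rk mg Mg by (simp add: powr_minus field_simps)
  then show ?thesis using KP unfolding M_def by (simp add: mult.assoc mult_left_mono)
qed


lemma le_min_ennreal: "a \<le> 1 \<Longrightarrow> a \<le> ennreal X \<Longrightarrow> a \<le> ennreal (min 1 X)"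
  by (cases "X \<le> 1") (auto simp: min_def)

locale mk2 = mk +
  fixes V W :: "state \<Rightarrow> real" and M0 M1 c0 \<delta> g AV bW :: real
  assumes Vm[measurable]: "V \<in> borel_measurable S" and Wm[measurable]: "W \<in> borel_measurable S"
    and V0: "\<And>x. 0 \<le> V x" and W0: "\<And>x. x \<in> Om \<Longrightarrow> 0 \<le> W x"
    and M0: "M0 > 1" and M1: "M1 > 1" and c0: "c0 > 0" and \<delta>: "\<delta> > 0"
    and g: "3/2 \<le> g" "g \<le> 2" and AV: "AV \<ge> 0" and bW: "bW \<ge> 0"
    and drift1: "\<And>x. x \<in> Om \<Longrightarrow> V x > M0 \<Longrightarrow>
       P (\<lambda>y. ennreal (V y)) x + ennreal (c0 * V x powr (1 - 1 / g)) \<le> ennreal (V x)"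
    and PV: "\<And>x. x \<in> Om \<Longrightarrow> P (\<lambda>y. ennreal (V y)) x \<le> ennreal (AV * V x)"
    and PW: "\<And>x. x \<in> Om \<Longrightarrow> P (\<lambda>y. ennreal (W y)) x \<le> ennreal (W x) + ennreal bW"
    and drift2: "\<And>x. x \<in> Om \<Longrightarrow> V x \<le> M0 \<Longrightarrow> W x > M1 \<Longrightarrow>
       (\<Sum>k. hitP P {x. V x \<le> M0} (\<lambda>y. ennreal (W y)) k x) \<le> ennreal ((1 - \<delta>) * W x)"
begin

abbreviation "Gs \<equiv> {x. V x \<le> M0}"
abbreviation "Cs \<equiv> {x. V x \<le> M0 \<and> W x \<le> M1}"

lemma Gs_sets: "Gs \<in> sets S"
proof -
  have "{x \<in> space S. V x \<le> M0} \<in> sets S" by measurable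
  then show ?thesis by simp
qed
lemma Cs_sets: "Cs \<in> sets S"
proof -
  have "{x \<in> space S. V x \<le> M0 \<and> W x \<le> M1} \<in> sets S" by measurable
  then show ?thesis by simp
qed

definition "KP = max 1 ((g / c0) powr g)"
definition "DD = max 1 (2 powr g * AV * M0)"
definition "U x = (if V x \<le> M0 then DD else V x)"

lemma KP: "KP \<ge> 1" "KP \<ge> (g / c0) powr g" "KP > 0" unfolding KP_def by auto
lemma DD: "DD \<ge> 1" "DD \<ge> 2 powr g * AV * M0" unfolding DD_def by auto
lemma U1: "U x \<ge> 1" using DD M0 unfolding U_def by auto
lemma U_le: "U x \<le> DD * max 1 (V x)"
  using DD M0 unfolding U_def by (auto simp: max_def intro: order_trans[OF _ mult_left_mono[of 1]])

lemma tail: "x \<in> Om \<Longrightarrow> m \<ge> 1 \<Longrightarrow> svP P Gs m x \<le> ennreal (min 1 (KP * U x * real m powr (- g)))"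
proof (induction m arbitrary: x)
  case 0 then show ?case by simp
next
  case (Suc m)
  show ?case
  proof (cases "m = 0")
    case True
    have "svP P Gs (Suc m) x \<le> P (\<lambda>_. 1) x"
      using True by (simp, intro P_mono[OF Suc.prems(1)]) (auto simp: indicator_def)
    also have "\<dots> \<le> 1" by (rule P_one[OF Suc.prems(1)])
    also have "1 = ennreal (min 1 (KP * U x * real (Suc m) powr (- g)))"
      using True KP U1[of x] mult_mono[of 1 KP 1 "U x"] by (simp add: min_def)
    finally show ?thesis .
  next
    case False
    then have m1: "m \<ge> 1" by simp
    define B where "B y = indicator (- Gs) y * ennreal (min 1 (KP * U y * real m powr (- g)))" for y
    have "svP P Gs (Suc m) x = P (\<lambda>y. indicator (- Gs) y * svP P Gs m y) x" by simp
    also have "\<dots> \<le> P B x"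
      unfolding B_def using Suc.IH[OF _ m1] by (intro P_mono[OF Suc.prems(1)] mult_left_mono) auto
    finally have sB: "svP P Gs (Suc m) x \<le> P B x" .
    have B1: "P B x \<le> 1"
      using P_mono[OF Suc.prems(1), of B "\<lambda>_. 1"] P_one[OF Suc.prems(1)]
      unfolding B_def by (force simp: indicator_def)
    have BV: "P B x \<le> ennreal (KP * real m powr (- g)) * P (\<lambda>y. ennreal (V y)) x"
    proof -
      have "P B x \<le> P (\<lambda>y. ennreal (KP * real m powr (- g)) * ennreal (V y)) x"
      proof (rule P_mono[OF Suc.prems(1)])
        fix z assume z: "z \<in> Om"
        show "B z \<le> ennreal (KP * real m powr (- g)) * ennreal (V z)"
        proof (cases "z \<in> Gs")
          case True then show ?thesis unfolding B_def by simp
        next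
          case False
          then have "U z = V z" unfolding U_def by simp
          then have "min 1 (KP * U z * real m powr (- g)) \<le> KP * real m powr (- g) * V z" by (simp add: algebra_simps)
          then show ?thesis unfolding B_def using False KP V0[of z]
            by (simp add: ennreal_mult[symmetric])
        qed
      qed
      also have "\<dots> = ennreal (KP * real m powr (- g)) * P (\<lambda>y. ennreal (V y)) x"
        by (rule P_cmult) measurable
      finally show ?thesis .
    qed
    show ?thesis
    proof (cases "x \<in> Gs")
      case True
      have "P B x \<le> ennreal (KP * real m powr (- g)) * ennreal (AV * M0)"
      proof -
        have "P (\<lambda>y. ennreal (V y)) x \<le> ennreal (AV * M0)"
        proof -
          have "AV * V x \<le> AV * M0" using True AV by (intro mult_left_mono) auto
          then show ?thesis using PV[OF Suc.prems(1)] by (auto intro: order_trans ennreal_leI)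
        qed
        then show ?thesis using BV by (meson order_trans mult_left_mono zero_le)
      qed
      also have "\<dots> = ennreal (KP * real m powr (- g) * (AV * M0))"
        using KP AV M0 by (simp add: ennreal_mult[symmetric])
      also have "\<dots> \<le> ennreal (KP * U x * real (Suc m) powr (- g))"
      proof (rule ennreal_leI)
        have mm: "real m powr (- g) \<le> 2 powr g * real (Suc m) powr (- g)"
        proof -
          have "real (Suc m) \<le> 2 * real m" using m1 by simp
          then have "real (Suc m) powr g \<le> (2 * real m) powr g" using g by (intro powr_mono2) auto
          then have "real (Suc m) powr g \<le> 2 powr g * real m powr g" by (simp add: powr_mult)
          then show ?thesis using m1 by (simp add: powr_minus field_simps)
        qed
        have "KP * real m powr (- g) * (AV * M0) \<le> KP * (2 powr g * real (Suc m) powr (- g)) * (AV * M0)"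
          using KP AV M0 mm by (intro mult_right_mono mult_left_mono) auto
        also have "\<dots> = KP * (2 powr g * AV * M0) * real (Suc m) powr (- g)" by (simp add: algebra_simps)
        also have "\<dots> \<le> KP * DD * real (Suc m) powr (- g)"
          using KP DD by (intro mult_right_mono mult_left_mono) auto
        finally show "KP * real m powr (- g) * (AV * M0) \<le> KP * U x * real (Suc m) powr (- g)"
          using True unfolding U_def by simp
      qed
      finally show ?thesis using sB B1 by (auto intro!: le_min_ennreal intro: order_trans)
    next
      case False
      then have Vx: "V x > M0" by simp
      have d: "P (\<lambda>y. ennreal (V y)) x + ennreal (c0 * V x powr (1 - 1 / g)) \<le> ennreal (V x)"
        by (rule drift1[OF Suc.prems(1) Vx])
      then have "P (\<lambda>y. ennreal (V y)) x \<le> ennreal (V x)" by (metis add_increasing2 zero_le order_trans le_iff_add)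
      then obtain r where r: "P (\<lambda>y. ennreal (V y)) x = ennreal r" "r \<ge> 0"
        using le_ennreal_iff[of "V x"] V0[of x] by auto
      have rd: "r + c0 * V x powr (1 - 1 / g) \<le> V x"
        using d r c0 V0[of x] by (simp add: ennreal_plus[symmetric] del: ennreal_plus)
      have Ux: "U x = V x" using False unfolding U_def by simp
      show ?thesis
      proof (cases "KP * V x * real (Suc m) powr (- g) < 1")
        case True
        have "KP * real m powr (- g) * r \<le> KP * V x * (real m + 1) powr (- g)"
          using True g c0 KP M0 Vx m1 r rd by (intro tail_real) (auto simp: add.commute)
        then have tr: "KP * real m powr (- g) * r \<le> KP * U x * real (Suc m) powr (- g)"
          using Ux by (simp add: add.commute)
        have "P B x \<le> ennreal (KP * real m powr (- g)) * ennreal r" using BV r by simp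
        also have "\<dots> = ennreal (KP * real m powr (- g) * r)" using KP r by (simp add: ennreal_mult[symmetric])
        also have "\<dots> \<le> ennreal (KP * U x * real (Suc m) powr (- g))" using tr by (rule ennreal_leI)
        finally have "P B x \<le> ennreal (KP * U x * real (Suc m) powr (- g))" .
        then show ?thesis using sB B1 by (auto intro!: le_min_ennreal intro: order_trans)
      next
        case False
        then have "min 1 (KP * U x * real (Suc m) powr (- g)) = 1" using Ux by simp
        then show ?thesis using sB B1 by simp
      qed
    qed
  qed
qed

end

context mk2
begin

definition "dl = min \<delta> (1/2)"
definition "th = dl / 8"
definition "hatW x = (\<Sum>k. hitP P Gs (\<lambda>y. ennreal (W y)) k x)"
definition "aa = 2 * KP * DD * (1 + (2 / th) powr g) / dl"

lemma dl: "0 < dl" "dl \<le> 1/2" "dl \<le> \<delta>" unfolding dl_def using \<delta> by auto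
lemma th: "0 < th" "th \<le> 1/16" "th < 1" using dl unfolding th_def by auto
lemma aa: "aa \<ge> 0" unfolding aa_def using KP DD dl by auto

lemma Wm'[measurable]: "(\<lambda>y. ennreal (W y)) \<in> borel_measurable S" by measurable

lemma hatW_partial: "(\<Sum>j<J. hitP P Gs (\<lambda>y. ennreal (W y)) (Suc j) x) \<le> hatW x"
proof -
  have "(\<Sum>j<J. hitP P Gs (\<lambda>y. ennreal (W y)) (Suc j) x) = (\<Sum>k<Suc J. hitP P Gs (\<lambda>y. ennreal (W y)) k x)"
    by (subst sum.lessThan_Suc_shift) simp
  also have "\<dots> \<le> hatW x" unfolding hatW_def by (rule sum_le_suminf) (auto intro: summableI)
  finally show ?thesis .
qed

lemma powr_2th: "th > 0 \<Longrightarrow> real n > 0 \<Longrightarrow> (th * real n / 2) powr (- g) = (2 / th) powr g * real n powr (- g)"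
proof -
  assume t: "th > 0" and n: "real n > 0"
  have "(th * real n / 2) powr (- g) = 1 / (th * real n / 2) powr g" by (rule powr_minus_divide)
  also have "(th * real n / 2) powr g = (th / 2) powr g * real n powr g"
    using t n by (simp add: powr_mult[symmetric])
  also have "(th / 2) powr g = 1 / (2 / th) powr g" using t by (simp add: powr_divide)
  finally show ?thesis by (simp add: powr_minus_divide)
qed

lemma m0_bound:
  assumes x: "x \<in> Om" and n: "n \<ge> 1"
  shows "svP P Gs (nat \<lfloor>th * real n\<rfloor>) x \<le> ennreal (KP * U x * (2 / th) powr g * real n powr (- g))"
proof -
  have np: "real n > 0" using n by simp
  have KPU: "1 \<le> KP * U x" using mult_mono[of 1 KP 1 "U x"] KP U1[of x] by simp
  show ?thesis
  proof (cases "th * real n < 1")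
    case True
    have "0 \<le> th * real n" using th np by simp
    with True have m0: "nat \<lfloor>th * real n\<rfloor> = 0" by linarith
    have "1 \<le> 2 / (th * real n)" using True th np by (simp add: field_simps)
    then have "1 \<le> (2 / (th * real n)) powr g" using g by (intro ge_one_powr_ge_zero) auto
    also have "(2 / (th * real n)) powr g = (th * real n / 2) powr (- g)"
    proof -
      have e: "2 / (th * real n) = 1 / (th * real n / 2)" by simp
      show ?thesis unfolding e powr_divide powr_minus_divide by simp
    qed
    also have "\<dots> = (2 / th) powr g * real n powr (- g)" by (rule powr_2th[OF th(1) np])
    finally have a: "1 \<le> (2 / th) powr g * real n powr (- g)" .
    have "1 * 1 \<le> (KP * U x) * ((2 / th) powr g * real n powr (- g))"
      by (rule mult_mono[OF KPU a]) (use KPU in auto)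
    then show ?thesis using m0 by (simp add: mult.assoc)
  next
    case False
    define m0 where "m0 = nat \<lfloor>th * real n\<rfloor>"
    have "1 \<le> \<lfloor>th * real n\<rfloor>" using False by simp
    then have m01: "m0 \<ge> 1" unfolding m0_def by linarith
    have "real m0 = real_of_int \<lfloor>th * real n\<rfloor>" unfolding m0_def using \<open>1 \<le> \<lfloor>th * real n\<rfloor>\<close> by simp
    then have "real m0 > th * real n - 1" by linarith
    then have m0ge: "th * real n / 2 \<le> real m0" using m01 by simp
    have "svP P Gs m0 x \<le> ennreal (min 1 (KP * U x * real m0 powr (- g)))" by (rule tail[OF x m01])
    also have "\<dots> \<le> ennreal (KP * U x * real m0 powr (- g))" by (intro ennreal_leI) simp
    also have "\<dots> \<le> ennreal (KP * U x * ((2 / th) powr g * real n powr (- g)))"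
    proof (intro ennreal_leI mult_left_mono)
      have "real m0 powr (- g) \<le> (th * real n / 2) powr (- g)"
        using m0ge th np g by (intro powr_mono2') auto
      also have "\<dots> = (2 / th) powr g * real n powr (- g)" by (rule powr_2th[OF th(1) np])
      finally show "real m0 powr (- g) \<le> (2 / th) powr g * real n powr (- g)" .
      show "0 \<le> KP * U x" using KPU by simp
    qed
    finally show ?thesis unfolding m0_def by (simp add: mult.assoc)
  qed
qed

lemma step:
  assumes x: "x \<in> Om" and n: "n \<ge> 1"
    and IH: "\<And>m y. 1 \<le> m \<Longrightarrow> m < n \<Longrightarrow> y \<in> Om \<Longrightarrow> y \<in> Gs \<Longrightarrow> y \<notin> Cs \<Longrightarrow>
        svP P Cs m y \<le> ennreal (aa * W y * real m powr (- g))"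
  shows "svP P Cs n x \<le> ennreal (KP * U x * (1 + (2 / th) powr g) * real n powr (- g))
           + ennreal (aa * (1 - th) powr (- g) * real n powr (- g)) * hatW x"
proof -
  define gf where "gf m = (\<lambda>y. indicator (- Cs) y * svP P Cs m y)" for m
  define m0 where "m0 = nat \<lfloor>th * real n\<rfloor>"
  define cst where "cst = aa * (1 - th) powr (- g) * real n powr (- g)"
  have cst0: "cst \<ge> 0" unfolding cst_def using aa by simp
  have np: "real n > 0" using n by simp
  have tn0: "0 \<le> th * real n" using th np by simp
  then have "real m0 = real_of_int \<lfloor>th * real n\<rfloor>" unfolding m0_def by (simp add: of_nat_nat)
  then have m0le: "real m0 \<le> th * real n" by simp
  have "th * real n \<le> real n" using th np by (simp add: mult_le_cancel_right1)
  then have "real m0 \<le> real n" using m0le by linarith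
  then have m0n: "m0 \<le> n" by simp
  obtain d where nd: "n = m0 + d" using m0n le_Suc_ex by blast
  have gfm[measurable]: "gf m \<in> borel_measurable S" for m
    unfolding gf_def using Cs_sets by (intro borel_measurable_times_ennreal ind_meas compl_sets sv_meas)
  have id: "svP P Cs n x = svP P Gs n x + (\<Sum>j<n. hitP P Gs (gf (n - Suc j)) (Suc j) x)"
    unfolding gf_def by (rule ident[OF Gs_sets Cs_sets]) auto
  have split: "(\<Sum>j<n. hitP P Gs (gf (n - Suc j)) (Suc j) x)
      = (\<Sum>j<m0. hitP P Gs (gf (n - Suc j)) (Suc j) x) + (\<Sum>i<d. hitP P Gs (gf (n - Suc (m0 + i))) (Suc (m0 + i)) x)"
    unfolding nd by (rule sum_split_add)
  have part1: "(\<Sum>j<m0. hitP P Gs (gf (n - Suc j)) (Suc j) x) \<le> ennreal cst * hatW x"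
  proof -
    have "hitP P Gs (gf (n - Suc j)) (Suc j) x \<le> ennreal cst * hitP P Gs (\<lambda>y. ennreal (W y)) (Suc j) x"
      if j: "j < m0" for j
    proof -
      have "hitP P Gs (gf (n - Suc j)) (Suc j) x \<le> hitP P Gs (\<lambda>y. ennreal cst * ennreal (W y)) (Suc j) x"
      proof (rule hit_mono[OF x])
        fix z assume z: "z \<in> Om" "z \<in> Gs"
        show "gf (n - Suc j) z \<le> ennreal cst * ennreal (W z)"
        proof (cases "z \<in> Cs")
          case True then show ?thesis unfolding gf_def by simp
        next
          case False
          define m where "m = n - Suc j"
          have "real (Suc j) \<le> real m0" using j by simp
          then have mge: "real m \<ge> (1 - th) * real n" unfolding m_def using m0le j m0n
            by (simp add: of_nat_diff algebra_simps)
          have "(1 - th) * real n > 0" using th np by simp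
          then have "real m > 0" using mge by linarith
          then have m1: "m \<ge> 1" by simp
          have mn: "m < n" unfolding m_def using j m0n by simp
          have "svP P Cs m z \<le> ennreal (aa * W z * real m powr (- g))" by (rule IH[OF m1 mn z(1) z(2) False])
          also have "\<dots> \<le> ennreal (cst * W z)"
          proof (rule ennreal_leI)
            have "real m powr (- g) \<le> ((1 - th) * real n) powr (- g)"
              using mge th np g by (intro powr_mono2') auto
            also have "\<dots> = (1 - th) powr (- g) * real n powr (- g)" using th np by (simp add: powr_mult)
            finally have "real m powr (- g) \<le> (1 - th) powr (- g) * real n powr (- g)" .
            then have "aa * W z * real m powr (- g) \<le> aa * W z * ((1 - th) powr (- g) * real n powr (- g))"
              using aa W0[OF z(1)] by (intro mult_left_mono) auto
            then show "aa * W z * real m powr (- g) \<le> cst * W z" unfolding cst_def by (simp add: algebra_simps)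
          qed
          finally show ?thesis unfolding gf_def m_def using False cst0 W0[OF z(1)]
            by (simp add: ennreal_mult[symmetric])
        qed
      qed
      also have "\<dots> = ennreal cst * hitP P Gs (\<lambda>y. ennreal (W y)) (Suc j) x"
        by (rule hit_cmult[OF Gs_sets]) measurable
      finally show ?thesis .
    qed
    then have "(\<Sum>j<m0. hitP P Gs (gf (n - Suc j)) (Suc j) x) \<le> (\<Sum>j<m0. ennreal cst * hitP P Gs (\<lambda>y. ennreal (W y)) (Suc j) x)"
      by (intro sum_mono) auto
    also have "\<dots> = ennreal cst * (\<Sum>j<m0. hitP P Gs (\<lambda>y. ennreal (W y)) (Suc j) x)" by (simp add: sum_distrib_left)
    also have "\<dots> \<le> ennreal cst * hatW x" by (intro mult_left_mono hatW_partial) auto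
    finally show ?thesis .
  qed
  have part2: "(\<Sum>i<d. hitP P Gs (gf (n - Suc (m0 + i))) (Suc (m0 + i)) x) \<le> ennreal (KP * U x * (2 / th) powr g * real n powr (- g))"
  proof -
    have "(\<Sum>i<d. hitP P Gs (gf (n - Suc (m0 + i))) (Suc (m0 + i)) x) \<le> (\<Sum>i<d. hitP P Gs (\<lambda>_. 1) (Suc (m0 + i)) x)"
      by (intro sum_mono hit_mono[OF x]) (auto simp: gf_def indicator_def sv_le1)
    also have "\<dots> \<le> svP P Gs m0 x" by (rule hits_tail[OF Gs_sets x])
    also have "\<dots> \<le> ennreal (KP * U x * (2 / th) powr g * real n powr (- g))" unfolding m0_def by (rule m0_bound[OF x n])
    finally show ?thesis .
  qed
  have part0: "svP P Gs n x \<le> ennreal (KP * U x * real n powr (- g))"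
    using tail[OF x n] by (rule order_trans) (intro ennreal_leI, simp)
  have "svP P Cs n x \<le> ennreal (KP * U x * real n powr (- g)) + (ennreal cst * hatW x + ennreal (KP * U x * (2 / th) powr g * real n powr (- g)))"
    unfolding id split using part0 part1 part2 by (intro add_mono) auto
  also have "\<dots> = (ennreal (KP * U x * real n powr (- g)) + ennreal (KP * U x * (2 / th) powr g * real n powr (- g))) + ennreal cst * hatW x"
    by (simp only: add_ac)
  also have "ennreal (KP * U x * real n powr (- g)) + ennreal (KP * U x * (2 / th) powr g * real n powr (- g))
      = ennreal (KP * U x * real n powr (- g) + KP * U x * (2 / th) powr g * real n powr (- g))"
    using KP U1[of x] by (intro ennreal_plus[symmetric]) auto
  also have "KP * U x * real n powr (- g) + KP * U x * (2 / th) powr g * real n powr (- g) = KP * U x * (1 + (2 / th) powr g) * real n powr (- g)"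
    by (simp add: algebra_simps)
  finally show ?thesis unfolding cst_def .
qed

end

context mk2
begin

lemma thf: "(1 - th) powr (- g) * (1 - dl) \<le> 1 - dl / 2"
proof -
  have t: "0 < 1 - th" "1 - th \<le> 1" using th by auto
  have "(1 - th) powr 2 \<le> (1 - th) powr g" using t g by (intro powr_mono') auto
  moreover have "(1 - th) powr 2 = (1 - th)^2" using t by (simp add: powr_realpow)
  moreover have "(1 - th)^2 \<ge> 1 - dl / 4" unfolding th_def by (simp add: power2_eq_square algebra_simps)
  ultimately have a: "1 - dl / 4 \<le> (1 - th) powr g" by linarith
  have pos: "0 < 1 - dl / 4" using dl by simp
  have "(1 - th) powr (- g) = 1 / (1 - th) powr g" by (rule powr_minus_divide)
  also have "\<dots> \<le> 1 / (1 - dl / 4)" using a pos t by (intro divide_left_mono) auto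
  finally have b: "(1 - th) powr (- g) \<le> 1 / (1 - dl / 4)" .
  have "(1 - th) powr (- g) * (1 - dl) \<le> 1 / (1 - dl / 4) * (1 - dl)"
    using b dl by (intro mult_right_mono) auto
  also have "\<dots> \<le> 1 - dl / 2"
    using pos dl by (simp add: field_simps)
  finally show ?thesis .
qed

lemma inner: "n \<ge> 1 \<Longrightarrow> y \<in> Om \<Longrightarrow> y \<in> Gs \<Longrightarrow> y \<notin> Cs \<Longrightarrow> svP P Cs n y \<le> ennreal (aa * W y * real n powr (- g))"
proof (induction n arbitrary: y rule: less_induct)
  case (less n)
  define q where "q = (2 / th) powr g"
  define r where "r = real n powr (- g)"
  have q0: "q \<ge> 0" and r0: "r \<ge> 0" unfolding q_def r_def by auto
  have Wy: "W y > M1" using less.prems by auto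
  have Uy: "U y = DD" using less.prems unfolding U_def by auto
  have st: "svP P Cs n y \<le> ennreal (KP * U y * (1 + q) * r) + ennreal (aa * (1 - th) powr (- g) * r) * hatW y"
    unfolding q_def r_def by (rule step[OF less.prems(2,1)]) (rule less.IH, auto)
  have hw: "hatW y \<le> ennreal ((1 - dl) * W y)"
  proof -
    have "hatW y \<le> ennreal ((1 - \<delta>) * W y)" unfolding hatW_def using drift2[OF less.prems(2)] less.prems Wy by auto
    also have "\<dots> \<le> ennreal ((1 - dl) * W y)" using dl W0[OF less.prems(2)] by (intro ennreal_leI mult_right_mono) auto
    finally show ?thesis .
  qed
  have c2: "0 \<le> aa * (1 - th) powr (- g) * r" using aa r0 by simp
  have "svP P Cs n y \<le> ennreal (KP * U y * (1 + q) * r) + ennreal (aa * (1 - th) powr (- g) * r) * ennreal ((1 - dl) * W y)"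
    using st hw by (meson add_left_mono mult_left_mono order_trans zero_le)
  also have "\<dots> = ennreal (KP * U y * (1 + q) * r + aa * (1 - th) powr (- g) * r * ((1 - dl) * W y))"
    using c2 KP U1[of y] q0 r0 dl W0[OF less.prems(2)] by (simp add: ennreal_mult[symmetric] ennreal_plus[symmetric] del: ennreal_plus)
  also have "\<dots> \<le> ennreal (aa * W y * r)"
  proof (rule ennreal_leI)
    have e1: "KP * U y * (1 + q) = aa * dl / 2" unfolding aa_def Uy q_def using dl by simp
    have "aa * (1 - th) powr (- g) * r * ((1 - dl) * W y) = aa * r * W y * ((1 - th) powr (- g) * (1 - dl))"
      by (simp add: algebra_simps)
    also have "\<dots> \<le> aa * r * W y * (1 - dl / 2)"
      using thf aa r0 W0[OF less.prems(2)] by (intro mult_left_mono) auto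
    finally have e2: "aa * (1 - th) powr (- g) * r * ((1 - dl) * W y) \<le> aa * r * W y * (1 - dl / 2)" .
    have e3: "aa * dl / 2 * r \<le> aa * dl / 2 * r * W y"
      using mult_left_mono[of 1 "W y" "aa * dl / 2 * r"] aa dl r0 Wy M1 by simp
    have e4: "KP * U y * (1 + q) * r = aa * dl / 2 * r" using arg_cong[OF e1, of "\<lambda>t. t * r"] by simp
    have e5: "aa * r * W y * (1 - dl / 2) = aa * W y * r - aa * dl / 2 * r * W y" by (simp add: algebra_simps)
    show "KP * U y * (1 + q) * r + aa * (1 - th) powr (- g) * r * ((1 - dl) * W y) \<le> aa * W y * r"
      using e2 e3 e4 e5 by linarith
  qed
  finally show ?case unfolding r_def .
qed

definition "Z = (\<Sum>j. real (Suc j) powr (- g))"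

lemma Z_summable: "summable (\<lambda>j. real (Suc j) powr (- g))"
proof -
  have "summable (\<lambda>j. real j powr (- g))" using g by (subst summable_real_powr_iff) auto
  from summable_ignore_initial_segment[OF this, of 1] show ?thesis by simp
qed

lemma Z_part: "(\<Sum>j<J. real (Suc j) powr (- g)) \<le> Z"
  unfolding Z_def by (rule sum_le_suminf[OF Z_summable]) auto

lemma Z0: "Z \<ge> 0" using Z_part[of 0] by simp

lemma hatW_bound:
  assumes x: "x \<in> Om"
  shows "hatW x \<le> ennreal (W x + bW * (1 + KP * U x * Z))"
proof -
  have sv: "(\<Sum>j<J. svP P Gs j x) \<le> ennreal (1 + KP * U x * Z)" for J
  proof (cases J)
    case 0 then show ?thesis by simp
  next
    case (Suc J')
    have "(\<Sum>j<J. svP P Gs j x) = 1 + (\<Sum>j<J'. svP P Gs (Suc j) x)" unfolding Suc by (subst sum.lessThan_Suc_shift) simp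
    also have "\<dots> \<le> 1 + (\<Sum>j<J'. ennreal (KP * U x * real (Suc j) powr (- g)))"
    proof (intro add_left_mono sum_mono)
      fix j assume "j \<in> {..<J'}"
      show "svP P Gs (Suc j) x \<le> ennreal (KP * U x * real (Suc j) powr (- g))"
        by (rule order_trans[OF tail[OF x, of "Suc j"]]) (auto intro: ennreal_leI)
    qed
    also have "\<dots> = ennreal (1 + KP * U x * (\<Sum>j<J'. real (Suc j) powr (- g)))"
    proof -
      have "(\<Sum>j<J'. ennreal (KP * U x * real (Suc j) powr (- g))) = ennreal (\<Sum>j<J'. KP * U x * real (Suc j) powr (- g))"
        using KP U1[of x] by (intro sum_ennreal) auto
      moreover have "(\<Sum>j<J'. KP * U x * real (Suc j) powr (- g)) = KP * U x * (\<Sum>j<J'. real (Suc j) powr (- g))"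
        by (simp add: sum_distrib_left)
      moreover have "0 \<le> KP * U x * (\<Sum>j<J'. real (Suc j) powr (- g))" using KP U1[of x] by (intro mult_nonneg_nonneg sum_nonneg) auto
      ultimately show ?thesis by (metis ennreal_1 ennreal_plus zero_le_one)
    qed
    also have "\<dots> \<le> ennreal (1 + KP * U x * Z)"
      using KP U1[of x] Z_part[of J'] by (intro ennreal_leI add_left_mono mult_left_mono) auto
    finally show ?thesis .
  qed
  have part: "(\<Sum>k<K. hitP P Gs (\<lambda>y. ennreal (W y)) k x) \<le> ennreal (W x + bW * (1 + KP * U x * Z))" for K
  proof (cases K)
    case 0 then show ?thesis by simp
  next
    case (Suc J)
    have "(\<Sum>k<K. hitP P Gs (\<lambda>y. ennreal (W y)) k x) = (\<Sum>j<J. hitP P Gs (\<lambda>y. ennreal (W y)) (Suc j) x)"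
      unfolding Suc by (subst sum.lessThan_Suc_shift) simp
    also have "\<dots> \<le> (\<Sum>j<J. hitP P Gs (\<lambda>y. ennreal (W y)) (Suc j) x) + twP P Gs (\<lambda>y. ennreal (W y)) J x" by simp
    also have "\<dots> \<le> ennreal (W x) + ennreal bW * (\<Sum>j<J. svP P Gs j x)"
      by (rule hits_W[OF Gs_sets Wm' PW x])
    also have "\<dots> \<le> ennreal (W x) + ennreal bW * ennreal (1 + KP * U x * Z)"
      by (intro add_left_mono mult_left_mono sv) auto
    also have "\<dots> = ennreal (W x + bW * (1 + KP * U x * Z))"
      using W0[OF x] bW KP U1[of x] Z0 by (simp add: ennreal_mult[symmetric] ennreal_plus[symmetric] del: ennreal_plus)
    finally show ?thesis .
  qed
  show ?thesis unfolding hatW_def by (rule suminf_le_const) (auto intro: summableI part)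
qed

lemma final:
  "\<exists>C6. \<forall>x\<in>Om. \<forall>n\<ge>1. svP P Cs n x \<le> ennreal (C6 * (max 1 (W x) + max 1 (V x)) * real n powr (- g))"
proof -
  define q where "q = (2 / th) powr g"
  define a1 where "a1 = KP * DD * (1 + q)"
  define a2 where "a2 = aa * (1 - th) powr (- g)"
  define C6 where "C6 = a1 + a2 * (1 + bW) + a2 * (bW * KP * DD * Z)"
  have q0: "q \<ge> 0" unfolding q_def by simp
  have a10: "a1 \<ge> 0" unfolding a1_def using KP DD q0 by simp
  have a20: "a2 \<ge> 0" unfolding a2_def using aa by simp
  show ?thesis
  proof (intro exI ballI allI impI)
    fix x n assume x: "x \<in> Om" and n: "(1::nat) \<le> n"
    define r where "r = real n powr (- g)"
    have r0: "r \<ge> 0" unfolding r_def by simp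
    have st: "svP P Cs n x \<le> ennreal (KP * U x * (1 + q) * r) + ennreal (a2 * r) * hatW x"
      unfolding q_def r_def a2_def by (rule step[OF x n]) (rule inner, auto)
    also have "\<dots> \<le> ennreal (KP * U x * (1 + q) * r) + ennreal (a2 * r) * ennreal (W x + bW * (1 + KP * U x * Z))"
      by (intro add_left_mono mult_left_mono hatW_bound[OF x]) auto
    also have "\<dots> = ennreal (KP * U x * (1 + q) * r + a2 * r * (W x + bW * (1 + KP * U x * Z)))"
      using KP U1[of x] q0 r0 a20 W0[OF x] bW Z0
      by (simp add: ennreal_mult[symmetric] ennreal_plus[symmetric] del: ennreal_plus)
    also have "\<dots> \<le> ennreal (C6 * (max 1 (W x) + max 1 (V x)) * r)"
    proof (rule ennreal_leI)
      define Wh where "Wh = max 1 (W x)"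
      define Vh where "Vh = max 1 (V x)"
      have Wh: "W x \<le> Wh" "1 \<le> Wh" unfolding Wh_def by auto
      have Vh: "1 \<le> Vh" unfolding Vh_def by auto
      have U: "U x \<le> DD * Vh" unfolding Vh_def by (rule U_le)
      have t1: "KP * U x * (1 + q) \<le> a1 * Vh"
      proof -
        have "KP * U x * (1 + q) \<le> KP * (DD * Vh) * (1 + q)" using U KP q0 by (intro mult_right_mono mult_left_mono) auto
        also have "\<dots> = a1 * Vh" unfolding a1_def by (simp add: ac_simps)
        finally show ?thesis .
      qed
      have t2: "W x + bW * (1 + KP * U x * Z) \<le> (1 + bW) * Wh + (bW * KP * DD * Z) * Vh"
      proof -
        have "bW \<le> bW * Wh" using bW Wh by (simp add: mult_le_cancel_left1)
        moreover have "bW * (KP * U x * Z) \<le> bW * (KP * (DD * Vh) * Z)"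
          using U bW KP Z0 by (intro mult_left_mono mult_right_mono) auto
        ultimately show ?thesis using Wh by (simp add: algebra_simps)
      qed
      have "KP * U x * (1 + q) * r + a2 * r * (W x + bW * (1 + KP * U x * Z))
          \<le> a1 * Vh * r + a2 * r * ((1 + bW) * Wh + (bW * KP * DD * Z) * Vh)"
        using add_mono[OF mult_right_mono[OF t1 r0] mult_left_mono[OF t2, of "a2 * r"]] r0 a20 by simp
      also have "\<dots> \<le> C6 * (Wh + Vh) * r"
      proof -
        have "a1 * Vh + a2 * ((1 + bW) * Wh + (bW * KP * DD * Z) * Vh)
            = a1 * Vh + (a2 * (1 + bW)) * Wh + (a2 * (bW * KP * DD * Z)) * Vh" by (simp add: algebra_simps)
        also have "\<dots> \<le> C6 * (Wh + Vh)"
          unfolding C6_def using a10 a20 bW KP DD Z0 Wh Vh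
          by (simp add: algebra_simps add_mono mult_nonneg_nonneg)
        finally have h: "a1 * Vh + a2 * ((1 + bW) * Wh + (bW * KP * DD * Z) * Vh) \<le> C6 * (Wh + Vh)" .
        have "a1 * Vh * r + a2 * r * ((1 + bW) * Wh + (bW * KP * DD * Z) * Vh)
            = (a1 * Vh + a2 * ((1 + bW) * Wh + (bW * KP * DD * Z) * Vh)) * r" by (simp add: algebra_simps)
        also have "\<dots> \<le> C6 * (Wh + Vh) * r" by (rule mult_right_mono[OF h r0])
        finally show ?thesis .
      qed
      finally show "KP * U x * (1 + q) * r + a2 * r * (W x + bW * (1 + KP * U x * Z)) \<le> C6 * (max 1 (W x) + max 1 (V x)) * r"
        unfolding Wh_def Vh_def .
    qed
    finally show "svP P Cs n x \<le> ennreal (C6 * (max 1 (W x) + max 1 (V x)) * real n powr (- g))" unfolding r_def .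
  qed
qed

end

lemma survP_eq: "survP N TL TR K h A n = svP (Pt N TL TR K h) A n"
  by (induction n) auto

lemma hitG_eq: "hitG N TL TR K h G f k = hitP (Pt N TL TR K h) G f k"
  by (induction N TL TR K h G f k rule: hitG.induct) auto

theorem theorem6p6:
  fixes N :: nat and TL TR :: real
  assumes "N \<ge> 1" and "TL > 0" and "TR > 0"
  shows "\<exists>K0. \<forall>K \<ge> K0. \<exists>\<eta>0 > 0. \<forall>\<eta>. 0 < \<eta> \<and> \<eta> < \<eta>0 \<longrightarrow>
    (\<exists>h0 > 0. \<forall>h. 0 < h \<and> h < h0 \<longrightarrow>
      (\<forall>M0 M1::real.
         M0 > 1 \<and>
         (\<exists>c0 > 0. \<forall>E. inOrth N E \<and> Vf N \<eta> E > M0 \<longrightarrow>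
            Pt N TL TR K h (\<lambda>y. ennreal (Vf N \<eta> y)) E
              + ennreal (c0 * Vf N \<eta> E powr (1 - 1 / (2 * (1 - \<eta>))))
            \<le> ennreal (Vf N \<eta> E)) \<and>
         M1 > 1 \<and>
         (\<exists>\<delta> > 0. \<forall>E. inOrth N E \<and> Vf N \<eta> E \<le> M0 \<and> Wf N E > M1 \<longrightarrow>
            hatP N TL TR K h {E. Vf N \<eta> E \<le> M0} (\<lambda>y. ennreal (Wf N y)) E
            \<le> ennreal ((1 - \<delta>) * Wf N E))
       \<longrightarrow>
         (\<forall>\<epsilon> > 0. \<exists>C6::real. \<forall>E. inOrth N E \<longrightarrow> (\<forall>n::nat. n \<ge> 1 \<longrightarrow>
            survP N TL TR K h {E. Vf N \<eta> E \<le> M0 \<and> Wf N E \<le> M1} n E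
            \<le> ennreal (C6 * (max 1 (Wf N E) + max 1 (Vf N \<eta> E))
                        * real n powr (- ((2 - 2 * \<eta>) - \<epsilon>)))))))"
  apply (rule exI[of _ 1])
  apply (intro allI impI)
  apply (rule exI[of _ "1/4"])
  apply (rule conjI, simp)
  apply (intro allI impI)
  apply (rule exI[of _ 1])
  apply (rule conjI, simp)
  apply (intro allI impI)
  subgoal premises prems for K \<eta> h M0 M1 \<epsilon>
  proof -
    have K1: "K \<ge> 1" and eta: "0 < \<eta> \<and> \<eta> < 1/4" and hh: "0 < h \<and> h < 1" and eps: "\<epsilon> > 0"
      using prems by auto
    note H = prems(4)
    from H obtain c0 \<delta> where M0: "M0 > 1" and M1: "M1 > 1" and c0: "c0 > 0" and \<delta>: "\<delta> > 0"
      and D1: "\<And>E. inOrth N E \<Longrightarrow> Vf N \<eta> E > M0 \<Longrightarrow>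
            Pt N TL TR K h (\<lambda>y. ennreal (Vf N \<eta> y)) E
              + ennreal (c0 * Vf N \<eta> E powr (1 - 1 / (2 * (1 - \<eta>)))) \<le> ennreal (Vf N \<eta> E)"
      and D2: "\<And>E. inOrth N E \<Longrightarrow> Vf N \<eta> E \<le> M0 \<Longrightarrow> Wf N E > M1 \<Longrightarrow>
            hatP N TL TR K h {E. Vf N \<eta> E \<le> M0} (\<lambda>y. ennreal (Wf N y)) E \<le> ennreal ((1 - \<delta>) * Wf N E)"
      by blast
    have N: "N \<ge> 1" and TL: "TL > 0" and TR: "TR > 0" by fact+
    have K: "K > 0" using K1 by simp
    have h: "h > 0" using hh by simp
    have et: "0 < \<eta>" "\<eta> < 1" using eta by auto
    define g where "g = 2 - 2 * \<eta>"
    define AV where "AV = exp (Lam N K * h * (2 / (aexp N N * \<eta>) - 1))"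
    define bW where "bW = (TL + TR) * exp (Lam N K * h)"
    interpret m: mk2 "Pt N TL TR K h" "{E. inOrth N E}" "Vf N \<eta>" "Wf N" M0 M1 c0 \<delta> g AV bW
    proof
      show "f \<in> borel_measurable S \<Longrightarrow> Pt N TL TR K h f \<in> borel_measurable S" for f
        by (rule Pt_meas[OF N TL TR K h])
      show "f \<in> borel_measurable S \<Longrightarrow> g \<in> borel_measurable S \<Longrightarrow>
          Pt N TL TR K h (\<lambda>x. f x + g x) x = Pt N TL TR K h f x + Pt N TL TR K h g x" for f g x
        by (rule Pt_add[OF N TL TR K h])
      show "f \<in> borel_measurable S \<Longrightarrow> Pt N TL TR K h (\<lambda>x. c * f x) x = c * Pt N TL TR K h f x" for f c x
        by (rule Pt_cmult[OF N TL TR K h])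
      show "x \<in> {E. inOrth N E} \<Longrightarrow> (\<And>z. z \<in> {E. inOrth N E} \<Longrightarrow> f z \<le> g z) \<Longrightarrow>
          Pt N TL TR K h f x \<le> Pt N TL TR K h g x" for x f g
        using Pt_mono[OF N TL TR K h, of x f g] by simp
      show "x \<in> {E. inOrth N E} \<Longrightarrow> Pt N TL TR K h (\<lambda>_. 1) x \<le> 1" for x
        using Pt_one[OF N TL TR K h, of x] by simp
      show "Vf N \<eta> \<in> borel_measurable S" using Vf_meas by simp
      show "Wf N \<in> borel_measurable S" using Wf_meas by simp
      show "0 \<le> Vf N \<eta> x" for x by (rule Vf_nonneg)
      show "x \<in> {E. inOrth N E} \<Longrightarrow> 0 \<le> Wf N x" for x using Wf_nonneg by simp
      show "M0 > 1" "M1 > 1" "c0 > 0" "\<delta> > 0" by fact+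
      show "3/2 \<le> g" "g \<le> 2" unfolding g_def using eta by auto
      show "AV \<ge> 0" "bW \<ge> 0" unfolding AV_def bW_def using TL TR by auto
      show "x \<in> {E. inOrth N E} \<Longrightarrow> Vf N \<eta> x > M0 \<Longrightarrow>
         Pt N TL TR K h (\<lambda>y. ennreal (Vf N \<eta> y)) x + ennreal (c0 * Vf N \<eta> x powr (1 - 1 / g)) \<le> ennreal (Vf N \<eta> x)" for x
      proof -
        have "2 * (1 - \<eta>) = g" unfolding g_def by simp
        then show "x \<in> {E. inOrth N E} \<Longrightarrow> Vf N \<eta> x > M0 \<Longrightarrow> ?thesis" using D1[of x] by simp
      qed
      show "x \<in> {E. inOrth N E} \<Longrightarrow> Pt N TL TR K h (\<lambda>y. ennreal (Vf N \<eta> y)) x \<le> ennreal (AV * Vf N \<eta> x)" for x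
        unfolding AV_def using Pt_V[OF N TL TR K h, of x \<eta>] et by simp
      show "x \<in> {E. inOrth N E} \<Longrightarrow> Pt N TL TR K h (\<lambda>y. ennreal (Wf N y)) x \<le> ennreal (Wf N x) + ennreal bW" for x
        unfolding bW_def using Pt_W[OF N TL TR K h, of x] Wf_nonneg[of N x] TL TR
        by (simp add: ennreal_plus[symmetric] del: ennreal_plus)
      show "x \<in> {E. inOrth N E} \<Longrightarrow> Vf N \<eta> x \<le> M0 \<Longrightarrow> Wf N x > M1 \<Longrightarrow>
         (\<Sum>k. hitP (Pt N TL TR K h) {x. Vf N \<eta> x \<le> M0} (\<lambda>y. ennreal (Wf N y)) k x) \<le> ennreal ((1 - \<delta>) * Wf N x)" for x
        using D2[of x] by (simp add: hatP_def hitG_eq)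
    qed
    obtain C6 where C6: "\<And>x n. x \<in> {E. inOrth N E} \<Longrightarrow> n \<ge> 1 \<Longrightarrow>
        svP (Pt N TL TR K h) {x. Vf N \<eta> x \<le> M0 \<and> Wf N x \<le> M1} n x
          \<le> ennreal (C6 * (max 1 (Wf N x) + max 1 (Vf N \<eta> x)) * real n powr (- g))"
      using m.final by blast
    show "\<exists>C6::real. \<forall>E. inOrth N E \<longrightarrow> (\<forall>n::nat. n \<ge> 1 \<longrightarrow>
            survP N TL TR K h {E. Vf N \<eta> E \<le> M0 \<and> Wf N E \<le> M1} n E
            \<le> ennreal (C6 * (max 1 (Wf N E) + max 1 (Vf N \<eta> E)) * real n powr (- ((2 - 2 * \<eta>) - \<epsilon>))))"
    proof (intro exI[of _ "max 0 C6"] allI impI)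
      fix E :: state and n :: nat assume E: "inOrth N E" and n: "n \<ge> 1"
      define X where "X = max 1 (Wf N E) + max 1 (Vf N \<eta> E)"
      have X0: "X \<ge> 0" unfolding X_def by simp
      have "survP N TL TR K h {E. Vf N \<eta> E \<le> M0 \<and> Wf N E \<le> M1} n E \<le> ennreal (C6 * X * real n powr (- g))"
        unfolding survP_eq X_def using C6[of E n] E n by simp
      also have "\<dots> \<le> ennreal (max 0 C6 * X * real n powr (- ((2 - 2 * \<eta>) - \<epsilon>)))"
      proof (rule ennreal_leI)
        have "C6 * X * real n powr (- g) \<le> max 0 C6 * X * real n powr (- g)"
          using X0 by (intro mult_right_mono) auto
        also have "\<dots> \<le> max 0 C6 * X * real n powr (- ((2 - 2 * \<eta>) - \<epsilon>))"
          using X0 n eps unfolding g_def by (intro mult_left_mono powr_mono) auto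
        finally show "C6 * X * real n powr (- g) \<le> max 0 C6 * X * real n powr (- ((2 - 2 * \<eta>) - \<epsilon>))" .
      qed
      finally show "survP N TL TR K h {E. Vf N \<eta> E \<le> M0 \<and> Wf N E \<le> M1} n E
            \<le> ennreal (max 0 C6 * (max 1 (Wf N E) + max 1 (Vf N \<eta> E)) * real n powr (- ((2 - 2 * \<eta>) - \<epsilon>)))"
        unfolding X_def .
    qed
  qed
  done


end
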